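(* Let $p\ge2$ and $x_0\in\mathcal C_0$. There exist admissible constants $c,C_{6.6}>0$ such that, whenever $h<c$, $\delta^2<h$, $M^{-2/d}<h$ and $\rho\ge1$, $$\sum_{i=0}^{N-1}\mathbb E\big[\mathbf 1_{\{t_{i+1}<\tau_\infty\}}|X_{t_{i+1}}-X_{t_{i+1}^-}|^2\big]\le C_{6.6}\,h\big(\mathcal E^2(\mathrm{space})+\mathcal E^2(\mathrm{quantiz})\big),$$ where $X_{t_{i+1}^-}$ is the left limit at $t_{i+1}$ of the time-continuous extension defined below.
   Context: Standing setting. Fix $d\in\mathbb N^*$, $T>0$ and functions $b:\mathbb R^d\times\mathbb R\times\mathbb R^d\to\mathbb R^d$, $f:\mathbb R^d\times\mathbb R\times\mathbb R^d\to\mathbb R$, $\sigma:\mathbb R^d\times\mathbb R\to\mathbb R^{d\times d}$, $H:\mathbb R^d\to\mathbb R$ satisfying Assumption (A): $b,f,\sigma,H$ are uniformly Lipschitz continuous in all variables; $b,f,\sigma$ are bounded in the space variable $x$ and have at most linear growth in the other variables, i.e. $|b(x,y,z)|+|f(x,y,z)|+|\sigma(x,y)|\le\Lambda(1+|y|+|z|)$; $a=\sigma\sigma^*$ is uniformly elliptic; and $H$ is bounded in $C^{2+\alpha}(\mathbb R^d)$ for some $\alpha\in(0,1)$. Let $(\Omega,\mathcal F,\mathbb P)$ carry a $d$-dimensional Brownian motion $B$ with augmented natural filtration $(\mathcal F_t)$. Discretization: $N\in\mathbb N^*$, $h=T/N$, $t_k=kh$, $\Delta B^k=B_{t_{k+1}}-B_{t_k}$.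 Quantization: $M\in\mathbb N^*$, a grid $\Lambda(M)=\{y_1,\dots,y_M\}\subset\mathbb R^d$ with nearest-neighbour projection $G_{\Lambda(M)}$, and $g(\Delta B^k):=h^{1/2}G_{\Lambda(M)}(h^{-1/2}\Delta B^k)$; it is assumed that for every $q\ge1$ there is $C_{\rm Quantiz}(q,d)$ with $\mathbb E[|g(\Delta B^k)-\Delta B^k|^q]^{1/q}\le C_{\rm Quantiz}(q,d)h^{1/2}M^{-1/d}$. Spatial grids: $\delta>0$, $\mathcal C_\infty=\delta\mathbb Z^d$, $\Pi_\infty(x)$ the point with coordinates $\delta\lfloor\delta^{-1}x_j+1/2\rfloor$; $R>0$, $\rho\ge1$, $r_0=R$, $r_i=R+\rho$ for $1\le i\le N$; $\Delta_i=\{x\in\mathbb R^d:-\delta\lfloor r_i/\delta\rfloor-\delta/2\le x_j<\delta\lfloor r_i/\delta\rfloor+\delta/2,\ j=1,\dots,d\}$, $\mathcal C_i=\mathcal C_\infty\cap\Delta_i$; $\mathcal Q(r,y)=\big((y_j\vee(-\delta\lfloor r/\delta\rfloor))\wedge\delta\lfloor r/\delta\rfloor\big)_{1\le j\le d}$; $\Pi_i(x)=\mathcal Q(r_i,\Pi_\infty(x))$ (so $\Pi_i(x)=\Pi_\infty(x)$ for $x\in\Delta_i$). Algorithm: for $x\in\mathcal C_N$, $\bar u(T,x)=H(x)$, $\bar v(T,x)=\nabla_xH(x)\sigma(x,H(x))$; for $k=N-1,\dots,0$ and $x\in\mathcal C_k$: $\mathcal T^0(t_k,x)=\sigma(x,\bar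 u(t_{k+1},x))g(\Delta B^k)$; $\hat v(t_k,x)=\mathbb E[\bar v(t_{k+1},\Pi_{k+1}(x+\mathcal T^0(t_k,x)))]$; $\mathcal T(t_k,x)=b(x,\bar u(t_{k+1},x),\hat v(t_k,x))h+\sigma(x,\bar u(t_{k+1},x))g(\Delta B^k)$; $\bar v(t_k,x)=h^{-1}\mathbb E[\bar u(t_{k+1},\Pi_{k+1}(x+\mathcal T(t_k,x)))g(\Delta B^k)]$; $\bar u(t_k,x)=\mathbb E[\bar u(t_{k+1},\Pi_{k+1}(x+\mathcal T(t_k,x)))]+f(x,\bar u(t_{k+1},x),\bar v(t_k,x))h$. Discrete processes: for $x_0\in\mathcal C_0$, $X_0=x_0$ and $X_{t_{k+1}}=\Pi_{k+1}(X_{t_k}+\mathcal T(t_k,X_{t_k}))$, where in $\mathcal T(t_k,X_{t_k})$ the random variable $g(\Delta B^k)$ is the quantized actual increment; $\tau_\infty=\inf\{t_k,1\le k\le N: X_{t_{k-1}}+\mathcal T(t_{k-1},X_{t_{k-1}})\notin\Delta_k\}$, $\inf\emptyset=+\infty$. Time-continuous extension: for $k\in\{0,\dots,N-1\}$ and $t\in[t_k,t_{k+1})$, $X_t=X_{t_k}+b(X_{t_k},\bar u(t_{k+1},X_{t_k}),\hat v(t_k,X_{t_k}))(t-t_k)+\sigma(X_{t_k},\bar u(t_{k+1},X_{t_k}))(B_t-B_{t_k})$. Error terms: $\mathcal E(\mathrm{space})=h^{-1}\delta$, $\mathcal E(\mathrm{quantiz})=h^{-1/2}M^{-1/d}$.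 A constant is called admissible if it depends only on $p$, $T$, $d$, the constants in Assumption (A) and the constants $C_{\rm Quantiz}(\cdot,d)$ (not on $h,\delta,M,R,\rho$, the starting point or the time index). *)

theory Defs
  imports "HOL-Probability.Probability"
begin

definition brownian_motion :: "'a measure \<Rightarrow> (real \<Rightarrow> 'a \<Rightarrow> real^'d) \<Rightarrow> bool" where
  "brownian_motion P B \<longleftrightarrow>
     prob_space P \<and>
     (\<forall>t\<ge>0. B t \<in> borel_measurable P) \<and>
     (\<forall>\<omega>\<in>space P. B 0 \<omega> = 0 \<and> continuous_on {0..} (\<lambda>t. B t \<omega>)) \<and>
     (\<forall>(ts::nat \<Rightarrow> real) (n::nat). 0 \<le> ts 0 \<and> (\<forall>i<n. ts i < ts (Suc i)) \<longrightarrow>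
        prob_space.indep_vars P (\<lambda>_. borel)
          (\<lambda>(i, j) \<omega>. (B (ts (Suc i)) \<omega> - B (ts i) \<omega>) $ j) ({..<n} \<times> (UNIV :: 'd set)) \<and>
        (\<forall>i<n. \<forall>j. distributed P lborel (\<lambda>\<omega>. (B (ts (Suc i)) \<omega> - B (ts i) \<omega>) $ j)
                       (\<lambda>x. ennreal (normal_density 0 (sqrt (ts (Suc i) - ts i)) x))))"

definition Pi_inf :: "real \<Rightarrow> real^'d \<Rightarrow> real^'d" where
  "Pi_inf \<delta> x = (\<chi> j. \<delta> * of_int \<lfloor>x $ j / \<delta> + 1/2\<rfloor>)"

definition radius :: "real \<Rightarrow> real \<Rightarrow> nat \<Rightarrow> real" where
  "radius R \<rho> i = (if i = 0 then R else R + \<rho>)"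

definition clampQ :: "real \<Rightarrow> real \<Rightarrow> real^'d \<Rightarrow> real^'d" where
  "clampQ \<delta> r y = (\<chi> j. min (max (y $ j) (- (\<delta> * of_int \<lfloor>r / \<delta>\<rfloor>))) (\<delta> * of_int \<lfloor>r / \<delta>\<rfloor>))"

definition Pi_i :: "real \<Rightarrow> real \<Rightarrow> real \<Rightarrow> nat \<Rightarrow> real^'d \<Rightarrow> real^'d" where
  "Pi_i \<delta> R \<rho> i x = clampQ \<delta> (radius R \<rho> i) (Pi_inf \<delta> x)"

definition Delta_i :: "real \<Rightarrow> real \<Rightarrow> real \<Rightarrow> nat \<Rightarrow> (real^'d) set" where
  "Delta_i \<delta> R \<rho> i = {x. \<forall>j.
      - \<delta> * of_int \<lfloor>radius R \<rho> i / \<delta>\<rfloor> - \<delta>/2 \<le> x $ j \<and>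
      x $ j < \<delta> * of_int \<lfloor>radius R \<rho> i / \<delta>\<rfloor> + \<delta>/2}"

definition C_inf :: "real \<Rightarrow> (real^'d) set" where
  "C_inf \<delta> = {x. \<forall>j. \<exists>m::int. x $ j = \<delta> * of_int m}"

definition C_i :: "real \<Rightarrow> real \<Rightarrow> real \<Rightarrow> nat \<Rightarrow> (real^'d) set" where
  "C_i \<delta> R \<rho> i = C_inf \<delta> \<inter> Delta_i \<delta> R \<rho> i"

definition tgrid :: "real \<Rightarrow> nat \<Rightarrow> nat \<Rightarrow> real" where
  "tgrid T N k = real k * (T / real N)"

definition dB :: "(real \<Rightarrow> 'a \<Rightarrow> real^'d) \<Rightarrow> real \<Rightarrow> nat \<Rightarrow> nat \<Rightarrow> 'a \<Rightarrow> real^'d" where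
  "dB B T N k \<omega> = B (tgrid T N (Suc k)) \<omega> - B (tgrid T N k) \<omega>"

definition gq :: "(real^'d \<Rightarrow> real^'d) \<Rightarrow> real \<Rightarrow> real^'d \<Rightarrow> real^'d" where
  "gq G h y = sqrt h *\<^sub>R G ((1 / sqrt h) *\<^sub>R y)"

definition gB :: "(real^'d \<Rightarrow> real^'d) \<Rightarrow> (real \<Rightarrow> 'a \<Rightarrow> real^'d) \<Rightarrow> real \<Rightarrow> nat \<Rightarrow> nat \<Rightarrow> 'a \<Rightarrow> real^'d" where
  "gB G B T N k \<omega> = gq G (T / real N) (dB B T N k \<omega>)"

definition nearest_proj :: "(real^'d) set \<Rightarrow> (real^'d \<Rightarrow> real^'d) \<Rightarrow> bool" where
  "nearest_proj Lam G \<longleftrightarrow> (\<forall>y. G y \<in> Lam \<and> (\<forall>z\<in>Lam. dist y (G y) \<le> dist y z))"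

text \<open>One backward step: from (u(t_{k+1},.), v(t_{k+1},.)) compute hat v(t_k,.)\<close>
definition vhat_step ::
  "(real^'d \<Rightarrow> real \<Rightarrow> real^'d^'d) \<Rightarrow> 'a measure \<Rightarrow> (real \<Rightarrow> 'a \<Rightarrow> real^'d) \<Rightarrow>
   (real^'d \<Rightarrow> real^'d) \<Rightarrow> real \<Rightarrow> nat \<Rightarrow> real \<Rightarrow> real \<Rightarrow> real \<Rightarrow> nat \<Rightarrow>
   (real^'d \<Rightarrow> real \<times> (real^'d)) \<Rightarrow> real^'d \<Rightarrow> real^'d" where
  "vhat_step \<sigma> P B G T N \<delta> R \<rho> k uv x =
     (\<integral>\<omega>. snd (uv (Pi_i \<delta> R \<rho> (Suc k) (x + \<sigma> x (fst (uv x)) *v gB G B T N k \<omega>))) \<partial>P)"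

text \<open>The transition T(t_k,x) evaluated at the sample \<omega> (for given u(t_{k+1},.) and hat v(t_k,x))\<close>
definition trans ::
  "(real^'d \<Rightarrow> real \<Rightarrow> real^'d \<Rightarrow> real^'d) \<Rightarrow> (real^'d \<Rightarrow> real \<Rightarrow> real^'d^'d) \<Rightarrow>
   (real \<Rightarrow> 'a \<Rightarrow> real^'d) \<Rightarrow> (real^'d \<Rightarrow> real^'d) \<Rightarrow> real \<Rightarrow> nat \<Rightarrow> nat \<Rightarrow>
   real \<Rightarrow> real^'d \<Rightarrow> real^'d \<Rightarrow> 'a \<Rightarrow> real^'d" where
  "trans b \<sigma> B G T N k u vh x \<omega> =
     (T / real N) *\<^sub>R b x u vh + \<sigma> x u *v gB G B T N k \<omega>"

definition uv_step ::
  "(real^'d \<Rightarrow> real \<Rightarrow> real^'d \<Rightarrow> real^'d) \<Rightarrow> (real^'d \<Rightarrow> real \<Rightarrow> real^'d \<Rightarrow> real) \<Rightarrow>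
   (real^'d \<Rightarrow> real \<Rightarrow> real^'d^'d) \<Rightarrow> 'a measure \<Rightarrow> (real \<Rightarrow> 'a \<Rightarrow> real^'d) \<Rightarrow>
   (real^'d \<Rightarrow> real^'d) \<Rightarrow> real \<Rightarrow> nat \<Rightarrow> real \<Rightarrow> real \<Rightarrow> real \<Rightarrow> nat \<Rightarrow>
   (real^'d \<Rightarrow> real \<times> (real^'d)) \<Rightarrow> real^'d \<Rightarrow> real \<times> (real^'d)" where
  "uv_step b f \<sigma> P B G T N \<delta> R \<rho> k uv x =
     (let h = T / real N;
          u1 = fst (uv x);
          vh = vhat_step \<sigma> P B G T N \<delta> R \<rho> k uv x;
          nxt = (\<lambda>\<omega>. fst (uv (Pi_i \<delta> R \<rho> (Suc k) (x + trans b \<sigma> B G T N k u1 vh x \<omega>))));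
          vb = (1 / h) *\<^sub>R (\<integral>\<omega>. nxt \<omega> *\<^sub>R gB G B T N k \<omega> \<partial>P);
          ub = (\<integral>\<omega>. nxt \<omega> \<partial>P) + f x u1 vb * h
      in (ub, vb))"

text \<open>uvj j = (bar u(t_{N-j},.), bar v(t_{N-j},.))\<close>
fun uvj ::
  "(real^'d \<Rightarrow> real \<Rightarrow> real^'d \<Rightarrow> real^'d) \<Rightarrow> (real^'d \<Rightarrow> real \<Rightarrow> real^'d \<Rightarrow> real) \<Rightarrow>
   (real^'d \<Rightarrow> real \<Rightarrow> real^'d^'d) \<Rightarrow> (real^'d \<Rightarrow> real) \<Rightarrow> (real^'d \<Rightarrow> real^'d) \<Rightarrow>
   'a measure \<Rightarrow> (real \<Rightarrow> 'a \<Rightarrow> real^'d) \<Rightarrow>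
   (real^'d \<Rightarrow> real^'d) \<Rightarrow> real \<Rightarrow> nat \<Rightarrow> real \<Rightarrow> real \<Rightarrow> real \<Rightarrow> nat \<Rightarrow>
   real^'d \<Rightarrow> real \<times> (real^'d)" where
  "uvj b f \<sigma> H DH P B G T N \<delta> R \<rho> 0 = (\<lambda>x. (H x, DH x v* \<sigma> x (H x)))"
| "uvj b f \<sigma> H DH P B G T N \<delta> R \<rho> (Suc j) =
     uv_step b f \<sigma> P B G T N \<delta> R \<rho> (N - Suc j) (uvj b f \<sigma> H DH P B G T N \<delta> R \<rho> j)"

definition ubar where
  "ubar b f \<sigma> H DH P B G T N \<delta> R \<rho> k x = fst (uvj b f \<sigma> H DH P B G T N \<delta> R \<rho> (N - k) x)"

definition vhat where
  "vhat b f \<sigma> H DH P B G T N \<delta> R \<rho> k x =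
     vhat_step \<sigma> P B G T N \<delta> R \<rho> k (uvj b f \<sigma> H DH P B G T N \<delta> R \<rho> (N - Suc k)) x"

definition Xstep where
  "Xstep b f \<sigma> H DH P B G T N \<delta> R \<rho> k X \<omega> =
      X + trans b \<sigma> B G T N k (ubar b f \<sigma> H DH P B G T N \<delta> R \<rho> (Suc k) X)
            (vhat b f \<sigma> H DH P B G T N \<delta> R \<rho> k X) X \<omega>"

fun Xd where
  "Xd b f \<sigma> H DH P B G T N \<delta> R \<rho> x0 0 \<omega> = x0"
| "Xd b f \<sigma> H DH P B G T N \<delta> R \<rho> x0 (Suc k) \<omega> =
     Pi_i \<delta> R \<rho> (Suc k) (Xstep b f \<sigma> H DH P B G T N \<delta> R \<rho> k (Xd b f \<sigma> H DH P B G T N \<delta> R \<rho> x0 k \<omega>) \<omega>)"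

text \<open>tau_infinity (value +infinity if the set is empty)\<close>
definition tau_inf where
  "tau_inf b f \<sigma> H DH P B G T N \<delta> R \<rho> x0 \<omega> =
     Inf {ereal (tgrid T N k) | k. 1 \<le> k \<and> k \<le> N \<and>
            Xstep b f \<sigma> H DH P B G T N \<delta> R \<rho> (k - 1) (Xd b f \<sigma> H DH P B G T N \<delta> R \<rho> x0 (k - 1) \<omega>) \<omega>
              \<notin> Delta_i \<delta> R \<rho> k}"

definition Xc where
  "Xc b f \<sigma> H DH P B G T N \<delta> R \<rho> x0 t \<omega> =
     (let h = T / real N; k = nat \<lfloor>t / h\<rfloor>;
          X = Xd b f \<sigma> H DH P B G T N \<delta> R \<rho> x0 k \<omega>;
          u = ubar b f \<sigma> H DH P B G T N \<delta> R \<rho> (Suc k) X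
      in X + (t - tgrid T N k) *\<^sub>R b X u (vhat b f \<sigma> H DH P B G T N \<delta> R \<rho> k X)
           + \<sigma> X u *v (B t \<omega> - B (tgrid T N k) \<omega>))"

definition Xleft where
  "Xleft b f \<sigma> H DH P B G T N \<delta> R \<rho> x0 t \<omega> =
     Lim (at_left t) (\<lambda>s. Xc b f \<sigma> H DH P B G T N \<delta> R \<rho> x0 s \<omega>)"

text \<open>The jump sum of Lemma 6.6 (expectations as nonnegative integrals)\<close>
definition jump_sum where
  "jump_sum b f \<sigma> H DH P B G T N \<delta> R \<rho> x0 =
     (\<Sum>i<N. \<integral>\<^sup>+\<omega>. ennreal
        (indicator {\<omega>. ereal (tgrid T N (Suc i)) < tau_inf b f \<sigma> H DH P B G T N \<delta> R \<rho> x0 \<omega>} \<omega> *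
         (norm (Xd b f \<sigma> H DH P B G T N \<delta> R \<rho> x0 (Suc i) \<omega>
                - Xleft b f \<sigma> H DH P B G T N \<delta> R \<rho> x0 (tgrid T N (Suc i)) \<omega>))\<^sup>2) \<partial>P)"

definition assumption_A where
  "assumption_A L Lam lam K \<alpha> b f \<sigma> H DH \<longleftrightarrow>
    (\<forall>x y z x' y' z'.
        norm (b x y z - b x' y' z') \<le> L * (norm (x - x') + \<bar>y - y'\<bar> + norm (z - z')) \<and>
        \<bar>f x y z - f x' y' z'\<bar> \<le> L * (norm (x - x') + \<bar>y - y'\<bar> + norm (z - z'))) \<and>
    (\<forall>x y x' y'. norm (\<sigma> x y - \<sigma> x' y') \<le> L * (norm (x - x') + \<bar>y - y'\<bar>)) \<and>
    (\<forall>x x'. \<bar>H x - H x'\<bar> \<le> L * norm (x - x')) \<and>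
    (\<forall>x y z. norm (b x y z) + \<bar>f x y z\<bar> + norm (\<sigma> x y) \<le> Lam * (1 + \<bar>y\<bar> + norm z)) \<and>
    (\<forall>x y \<xi>. \<xi> \<bullet> ((\<sigma> x y ** transpose (\<sigma> x y)) *v \<xi>) \<ge> lam * (norm \<xi>)\<^sup>2) \<and>
    (\<exists>D2H :: real^'d \<Rightarrow> real^'d^'d.
       (\<forall>x. (H has_derivative (\<lambda>v. DH x \<bullet> v)) (at x)) \<and>
       (\<forall>x. (DH has_derivative (\<lambda>v. D2H x *v v)) (at x)) \<and>
       (\<forall>x. \<bar>H x\<bar> \<le> K \<and> norm (DH x) \<le> K \<and> norm (D2H x) \<le> K) \<and>
       (\<forall>x x'. norm (D2H x - D2H x') \<le> K * (norm (x - x')) powr \<alpha>))"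

end

theory Submission
  imports Defs
begin


lemma bm_dB:
  fixes B :: "real \<Rightarrow> 'a \<Rightarrow> real^'d"
  assumes bm: "brownian_motion P B" and T: "T > 0" and N: "N \<ge> 1"
  shows "prob_space P"
    and "dB B T N k \<in> borel_measurable P"
    and "integrable P (\<lambda>\<omega>. dB B T N k \<omega> $ j)" and "(\<integral>\<omega>. dB B T N k \<omega> $ j \<partial>P) = 0"
    and "integrable P (\<lambda>\<omega>. (dB B T N k \<omega> $ j)^2)" and "(\<integral>\<omega>. (dB B T N k \<omega> $ j)^2 \<partial>P) = T / real N"
proof -
  have h: "T / real N > 0" using T N by auto
  show ps: "prob_space P" using bm unfolding brownian_motion_def by auto
  have tg: "\<And>k. tgrid T N k \<ge> 0" unfolding tgrid_def using h by (intro mult_nonneg_nonneg) auto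
  have mB: "\<And>t. t \<ge> 0 \<Longrightarrow> B t \<in> borel_measurable P" using bm unfolding brownian_motion_def by auto
  show "dB B T N k \<in> borel_measurable P" unfolding dB_def[abs_def]
    using mB[OF tg] mB[OF tg] by measurable
  define ts where "ts = (\<lambda>n. tgrid T N (k + n))"
  have "0 \<le> ts 0 \<and> (\<forall>i<1. ts i < ts (Suc i))" 
  proof -
    have "ts 0 = real k * (T / real N)" "ts (Suc 0) = real k * (T / real N) + T / real N"
      unfolding ts_def tgrid_def by (auto simp: distrib_right add_divide_distrib)
    moreover have "0 \<le> real k * (T / real N)" using h by (intro mult_nonneg_nonneg) auto
    ultimately show ?thesis using h by (auto simp only: One_nat_def less_Suc0 all_simps)
  qed
  then have D0: "distributed P lborel (\<lambda>\<omega>. (B (ts (Suc 0)) \<omega> - B (ts 0) \<omega>) $ j)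
                       (\<lambda>x. ennreal (normal_density 0 (sqrt (ts (Suc 0) - ts 0)) x))"
    using bm unfolding brownian_motion_def by blast
  have e1: "ts (Suc 0) - ts 0 = T / real N" unfolding ts_def tgrid_def by (simp add: distrib_right add_divide_distrib)
  have e2: "(\<lambda>\<omega>. (B (ts (Suc 0)) \<omega> - B (ts 0) \<omega>) $ j) = (\<lambda>\<omega>. dB B T N k \<omega> $ j)"
    unfolding ts_def dB_def by simp
  have D: "distributed P lborel (\<lambda>\<omega>. dB B T N k \<omega> $ j) (\<lambda>x. ennreal (normal_density 0 (sqrt (T / real N)) x))"
    using D0 unfolding e1 e2 .
  have s: "sqrt (T / real N) > 0" using h by simp
  show i1: "integrable P (\<lambda>\<omega>. dB B T N k \<omega> $ j)"
  proof -
    have "integrable lborel (\<lambda>x. normal_density 0 (sqrt (T / real N)) x * x)"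
      using integrable_normal_moment[where \<mu>=0 and \<sigma>="sqrt (T / real N)" and k=1] s by (simp only: diff_zero power_one_right)
    then show ?thesis using distributed_integrable[OF D, of "\<lambda>x. x"] by simp
  qed
  show "(\<integral>\<omega>. dB B T N k \<omega> $ j \<partial>P) = 0"
    using prob_space.normal_distributed_expectation[OF ps s D] by simp
  show "integrable P (\<lambda>\<omega>. (dB B T N k \<omega> $ j)^2)"
  proof -
    have "integrable lborel (\<lambda>x. normal_density 0 (sqrt (T / real N)) x * x^2)"
      using integrable_normal_moment[where \<mu>=0 and \<sigma>="sqrt (T / real N)" and k=2] s by (simp only: diff_zero power_one_right)
    then show ?thesis using distributed_integrable[OF D, of "\<lambda>x. x^2"] by simp
  qed
  have "(\<integral>\<omega>. (dB B T N k \<omega> $ j)^2 \<partial>P) = (\<integral>x. normal_density 0 (sqrt (T / real N)) x * x^2 \<partial>lborel)"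
    using distributed_integral[OF D, of "\<lambda>x. x^2"] by simp
  also have "\<dots> = T / real N"
    using integral_normal_moment_even[where \<mu>=0 and \<sigma>="sqrt (T / real N)" and k=1] h by simp
  finally show "(\<integral>\<omega>. (dB B T N k \<omega> $ j)^2 \<partial>P) = T / real N" .
qed



lemma powr2_norm: "(x::real) \<ge> 0 \<Longrightarrow> x powr 2 = x^2"
  by (cases "x = 0") (auto simp: powr_realpow[of x 2, simplified])

lemma norm_sq_vec: "(norm (x::real^'d))^2 = (\<Sum>j\<in>UNIV. (x $ j)^2)"
  unfolding power2_norm_eq_inner inner_vec_def by (simp add: power2_eq_square)

lemma sq_sum_le: "((a::real) + b)^2 \<le> 2 * a^2 + 2 * b^2"
proof -
  have "(a+b)^2 + (a-b)^2 = 2*a^2+2*b^2" by (simp add: power2_eq_square algebra_simps)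
  moreover have "(a-b)^2 \<ge> 0" by simp
  ultimately show ?thesis by linarith
qed

lemma bm_g:
  fixes B :: "real \<Rightarrow> 'a \<Rightarrow> real^'d" and G :: "real^'d \<Rightarrow> real^'d"
  assumes bm: "brownian_motion P B" and T: "T > 0" and N: "N \<ge> 1"
  and G: "G \<in> borel_measurable borel"
  and H1: "integrable P (\<lambda>\<omega>. norm (gB G B T N k \<omega> - dB B T N k \<omega>) powr 1) \<and>
     (\<integral>\<omega>. norm (gB G B T N k \<omega> - dB B T N k \<omega>) powr 1 \<partial>P) powr (1/1) \<le> c1 * sqrt (T / real N) * m"
  and H2: "integrable P (\<lambda>\<omega>. norm (gB G B T N k \<omega> - dB B T N k \<omega>) powr 2) \<and>
     (\<integral>\<omega>. norm (gB G B T N k \<omega> - dB B T N k \<omega>) powr 2 \<partial>P) powr (1/2) \<le> c2 * sqrt (T / real N) * m"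
  and m: "0 \<le> m" "m^2 \<le> T / real N" "m \<le> 1"
  shows "gB G B T N k \<in> borel_measurable P"
    and "integrable P (gB G B T N k)"
    and "integrable P (\<lambda>\<omega>. (norm (gB G B T N k \<omega>))^2)"
    and "(\<integral>\<omega>. (norm (gB G B T N k \<omega>))^2 \<partial>P) \<le> (2 * real CARD('d) + 2 * c2^2) * (T / real N)"
    and "\<And>\<beta>. \<bar>\<integral>\<omega>. \<beta> \<bullet> gB G B T N k \<omega> \<partial>P\<bar> \<le> norm \<beta> * \<bar>c1\<bar> * (T / real N)"
    and "integrable P (\<lambda>\<omega>. (norm (gB G B T N k \<omega> - dB B T N k \<omega>))^2)"
    and "(\<integral>\<omega>. (norm (gB G B T N k \<omega> - dB B T N k \<omega>))^2 \<partial>P) \<le> c2^2 * (T / real N) * m^2"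
proof -
  let ?h = "T / real N"
  let ?g = "gB G B T N k" and ?w = "dB B T N k"
  have h: "?h > 0" using T N by auto
  note facts = bm_dB[OF bm T N]
  interpret prob_space P by (rule facts(1))
  have mw[measurable]: "?w \<in> borel_measurable P" by (rule facts(2))
  note G[measurable]
  show mg[measurable]: "?g \<in> borel_measurable P"
    unfolding gB_def[abs_def] gq_def by measurable
  have mgw[measurable]: "(\<lambda>\<omega>. ?g \<omega> - ?w \<omega>) \<in> borel_measurable P" by measurable
  have iw2: "integrable P (\<lambda>\<omega>. (norm (?w \<omega>))^2)"
    unfolding norm_sq_vec by (rule Bochner_Integration.integrable_sum) (rule facts(5))
  have Iw2: "(\<integral>\<omega>. (norm (?w \<omega>))^2 \<partial>P) = real CARD('d) * ?h"
    unfolding norm_sq_vec using facts(5,6) by (subst Bochner_Integration.integral_sum) auto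
  have iw: "integrable P ?w"
  proof (rule Bochner_Integration.integrable_bound[where f="\<lambda>\<omega>. \<Sum>j\<in>UNIV. \<bar>?w \<omega> $ j\<bar>"])
    show "integrable P (\<lambda>\<omega>. \<Sum>j\<in>UNIV. \<bar>?w \<omega> $ j\<bar>)"
      by (rule Bochner_Integration.integrable_sum) (intro integrable_abs facts(3))
    show "AE x in P. norm (?w x) \<le> norm (\<Sum>j\<in>UNIV. \<bar>?w x $ j\<bar>)"
      using norm_le_l1_cart by (intro AE_I2) (auto intro: order_trans)
  qed (rule mw)
  have igw1: "integrable P (\<lambda>\<omega>. norm (?g \<omega> - ?w \<omega>))" using H1 by simp
  have Igw1: "(\<integral>\<omega>. norm (?g \<omega> - ?w \<omega>) \<partial>P) \<le> c1 * sqrt ?h * m" using H1 by simp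
  have igw: "integrable P (\<lambda>\<omega>. ?g \<omega> - ?w \<omega>)" using igw1 integrable_norm_iff[OF mgw] by simp
  show igw2: "integrable P (\<lambda>\<omega>. (norm (?g \<omega> - ?w \<omega>))^2)" using H2 by (simp add: powr2_norm)
  have I2: "(\<integral>\<omega>. (norm (?g \<omega> - ?w \<omega>))^2 \<partial>P) powr (1/2) \<le> c2 * sqrt ?h * m" using H2 by (simp add: powr2_norm)
  have I2nn: "(\<integral>\<omega>. (norm (?g \<omega> - ?w \<omega>))^2 \<partial>P) \<ge> 0" by (intro integral_nonneg_AE) auto
  then have "sqrt (\<integral>\<omega>. (norm (?g \<omega> - ?w \<omega>))^2 \<partial>P) \<le> c2 * sqrt ?h * m"
    using I2 by (simp add: powr_half_sqrt)
  then have "(sqrt (\<integral>\<omega>. (norm (?g \<omega> - ?w \<omega>))^2 \<partial>P))^2 \<le> (c2 * sqrt ?h * m)^2"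
    by (intro power_mono) auto
  then have "(\<integral>\<omega>. (norm (?g \<omega> - ?w \<omega>))^2 \<partial>P) \<le> (c2 * sqrt ?h * m)^2"
    using I2nn by simp
  also have "\<dots> = c2^2 * ?h * m^2" using h by (simp add: power_mult_distrib)
  finally show Igw2: "(\<integral>\<omega>. (norm (?g \<omega> - ?w \<omega>))^2 \<partial>P) \<le> c2^2 * ?h * m^2" .
  have ig: "integrable P ?g"
  proof -
    have "integrable P (\<lambda>\<omega>. ?w \<omega> + (?g \<omega> - ?w \<omega>))" using iw igw by (rule Bochner_Integration.integrable_add)
    then show ?thesis by simp
  qed
  show "integrable P ?g" by (rule ig)
  have pw: "\<And>\<omega>. (norm (?g \<omega>))^2 \<le> 2 * (norm (?w \<omega>))^2 + 2 * (norm (?g \<omega> - ?w \<omega>))^2"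
  proof -
    fix \<omega>
    have "norm (?g \<omega>) \<le> norm (?w \<omega>) + norm (?g \<omega> - ?w \<omega>)" by (metis norm_triangle_sub add.commute)
    then have "(norm (?g \<omega>))^2 \<le> (norm (?w \<omega>) + norm (?g \<omega> - ?w \<omega>))^2" by (simp add: power_mono)
    also have "\<dots> \<le> 2 * (norm (?w \<omega>))^2 + 2 * (norm (?g \<omega> - ?w \<omega>))^2"
      by (rule sq_sum_le)
    finally show "(norm (?g \<omega>))^2 \<le> 2 * (norm (?w \<omega>))^2 + 2 * (norm (?g \<omega> - ?w \<omega>))^2" .
  qed
  have ib: "integrable P (\<lambda>\<omega>. 2 * (norm (?w \<omega>))^2 + 2 * (norm (?g \<omega> - ?w \<omega>))^2)"
    using iw2 igw2 by auto
  show ig2: "integrable P (\<lambda>\<omega>. (norm (?g \<omega>))^2)"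
  proof (rule Bochner_Integration.integrable_bound[OF ib])
    show "AE x in P. norm ((norm (?g x))\<^sup>2) \<le> norm (2 * (norm (?w x))\<^sup>2 + 2 * (norm (?g x - ?w x))\<^sup>2)"
    proof (rule AE_I2)
      fix x
      have "0 \<le> 2 * (norm (?w x))\<^sup>2 + 2 * (norm (?g x - ?w x))\<^sup>2" by simp
      then show "norm ((norm (?g x))\<^sup>2) \<le> norm (2 * (norm (?w x))\<^sup>2 + 2 * (norm (?g x - ?w x))\<^sup>2)"
        using pw[of x] by (simp only: real_norm_def abs_of_nonneg zero_le_power2)
    qed
  qed measurable
  have "(\<integral>\<omega>. (norm (?g \<omega>))^2 \<partial>P) \<le> (\<integral>\<omega>. 2 * (norm (?w \<omega>))^2 + 2 * (norm (?g \<omega> - ?w \<omega>))^2 \<partial>P)"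
    by (rule integral_mono[OF ig2 ib]) (rule pw)
  also have "\<dots> = 2 * (real CARD('d) * ?h) + 2 * (\<integral>\<omega>. (norm (?g \<omega> - ?w \<omega>))^2 \<partial>P)"
    using iw2 igw2 Iw2 by simp
  also have "\<dots> \<le> 2 * (real CARD('d) * ?h) + 2 * (c2^2 * ?h * m^2)" using Igw2 by simp
  also have "\<dots> \<le> (2 * real CARD('d) + 2 * c2^2) * ?h"
  proof -
    have "m^2 \<le> 1" using m by (simp add: power_le_one)
    moreover have "0 \<le> c2^2 * ?h" using h by (intro mult_nonneg_nonneg) auto
    ultimately have "(c2^2 * ?h) * m^2 \<le> (c2^2 * ?h) * 1" by (intro mult_left_mono)
    then have "2 * (c2^2 * ?h * m^2) \<le> 2 * (c2^2 * ?h)" by simp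
    then show ?thesis by (simp only: distrib_right mult.assoc)
  qed
  finally show "(\<integral>\<omega>. (norm (?g \<omega>))^2 \<partial>P) \<le> (2 * real CARD('d) + 2 * c2^2) * ?h" .
  fix \<beta> :: "real^'d"
  have e0: "(\<integral>\<omega>. \<beta> \<bullet> ?w \<omega> \<partial>P) = 0"
    unfolding inner_vec_def using facts(3,4) by (subst Bochner_Integration.integral_sum) auto
  have "(\<integral>\<omega>. \<beta> \<bullet> ?g \<omega> \<partial>P) = (\<integral>\<omega>. \<beta> \<bullet> ?w \<omega> + \<beta> \<bullet> (?g \<omega> - ?w \<omega>) \<partial>P)"
    by (simp add: inner_diff_right)
  also have "\<dots> = (\<integral>\<omega>. \<beta> \<bullet> (?g \<omega> - ?w \<omega>) \<partial>P)"
    using e0 iw igw by (subst Bochner_Integration.integral_add) auto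
  finally have "\<bar>\<integral>\<omega>. \<beta> \<bullet> ?g \<omega> \<partial>P\<bar> = \<bar>\<integral>\<omega>. \<beta> \<bullet> (?g \<omega> - ?w \<omega>) \<partial>P\<bar>" by simp
  also have "\<dots> \<le> (\<integral>\<omega>. \<bar>\<beta> \<bullet> (?g \<omega> - ?w \<omega>)\<bar> \<partial>P)"
    by (rule integral_abs_bound)
  also have "\<dots> \<le> (\<integral>\<omega>. norm \<beta> * norm (?g \<omega> - ?w \<omega>) \<partial>P)"
    using igw1 igw by (intro integral_mono) (auto simp: Cauchy_Schwarz_ineq2)
  also have "\<dots> = norm \<beta> * (\<integral>\<omega>. norm (?g \<omega> - ?w \<omega>) \<partial>P)" by simp
  also have "\<dots> \<le> norm \<beta> * (\<bar>c1\<bar> * ?h)"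
  proof (rule mult_left_mono)
    have "m \<le> sqrt ?h" using m by (metis real_le_rsqrt)
    then have "sqrt ?h * m \<le> sqrt ?h * sqrt ?h" using h by (intro mult_left_mono) auto
    also have "\<dots> = ?h" using h by (simp only: real_sqrt_mult_self)
    finally have "sqrt ?h * m \<le> ?h" .
    then have "\<bar>c1\<bar> * (sqrt ?h * m) \<le> \<bar>c1\<bar> * ?h" by (intro mult_left_mono) auto
    moreover have "c1 * (sqrt ?h * m) \<le> \<bar>c1\<bar> * (sqrt ?h * m)"
      using m h by (intro mult_right_mono) auto
    ultimately have "c1 * sqrt ?h * m \<le> \<bar>c1\<bar> * ?h" by (simp add: mult.assoc)
    then show "(\<integral>\<omega>. norm (?g \<omega> - ?w \<omega>) \<partial>P) \<le> \<bar>c1\<bar> * ?h" using Igw1 by linarith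
  qed simp
  finally show "\<bar>\<integral>\<omega>. \<beta> \<bullet> ?g \<omega> \<partial>P\<bar> \<le> norm \<beta> * \<bar>c1\<bar> * ?h" by simp
qed



lemma clamp_scale:
  fixes \<delta> :: real and a m :: int
  assumes "\<delta> > 0"
  shows "min (max (\<delta> * of_int a) (- (\<delta> * of_int m))) (\<delta> * of_int m) = \<delta> * of_int (min (max a (-m)) m)"
proof -
  have mo: "\<And>x y::int. (\<delta> * of_int x \<le> \<delta> * of_int y) = (x \<le> y)" using assms by (simp add: mult_le_cancel_left_pos)
  have e: "-(\<delta> * of_int m) = \<delta> * of_int (-m)" by simp
  show ?thesis unfolding e min_def max_def by (auto simp only: mo split: if_splits)
qed

lemma Pi_i_int:
  assumes "\<delta> > 0"
  shows "Pi_i \<delta> R \<rho> i y = (\<chi> j. \<delta> * of_int (min (max \<lfloor>y $ j / \<delta> + 1/2\<rfloor> (- \<lfloor>radius R \<rho> i / \<delta>\<rfloor>)) \<lfloor>radius R \<rho> i / \<delta>\<rfloor>))"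
  unfolding Pi_i_def clampQ_def Pi_inf_def using clamp_scale[OF assms] by (simp add: vec_eq_iff)

lemma meas_Pi_comp:
  fixes F :: "real^'d \<Rightarrow> 'b::topological_space" and \<xi> :: "'a \<Rightarrow> real^'d"
  assumes d: "\<delta> > 0" and xi[measurable]: "\<xi> \<in> borel_measurable M"
  shows "(\<lambda>\<omega>. F (Pi_i \<delta> R \<rho> i (\<xi> \<omega>))) \<in> borel_measurable M"
proof -
  define m where "m = \<lfloor>radius R \<rho> i / \<delta>\<rfloor>"
  define \<kappa> where "\<kappa> = (\<lambda>y::real^'d. (\<lambda>j. min (max \<lfloor>y $ j / \<delta> + 1/2\<rfloor> (- m)) m))"
  have e: "(\<lambda>\<omega>. F (Pi_i \<delta> R \<rho> i (\<xi> \<omega>))) = (\<lambda>\<omega>. (\<lambda>n \<omega>. F (\<chi> j. \<delta> * of_int (n j))) (\<kappa> (\<xi> \<omega>)) \<omega>)"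
    unfolding \<kappa>_def m_def Pi_i_int[OF d] by simp
  have "(\<lambda>\<omega>. \<kappa> (\<xi> \<omega>)) \<in> measurable M (count_space UNIV)"
    unfolding measurable_count_space_eq2_countable
  proof safe
    fix n :: "'d \<Rightarrow> int"
    have [measurable]: "\<And>j. (\<lambda>\<omega>. \<xi> \<omega> $ j) \<in> borel_measurable M"
      using measurable_compose[OF xi borel_measurable_nth] by simp
    have "Measurable.pred M (\<lambda>\<omega>. \<forall>j. min (max \<lfloor>\<xi> \<omega> $ j / \<delta> + 1/2\<rfloor> (- m)) m = n j)"
      by measurable
    moreover have "(\<lambda>\<omega>. \<kappa> (\<xi> \<omega>)) -` {n} \<inter> space M = {\<omega>\<in>space M. \<forall>j. min (max \<lfloor>\<xi> \<omega> $ j / \<delta> + 1/2\<rfloor> (- m)) m = n j}"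
      unfolding \<kappa>_def by (auto simp: fun_eq_iff)
    ultimately show "(\<lambda>\<omega>. \<kappa> (\<xi> \<omega>)) -` {n} \<inter> space M \<in> sets M" by (simp add: pred_def)
  qed auto
  then show ?thesis unfolding e
    by (rule measurable_compose_countable[rotated]) simp
qed



lemma abs1_le: "\<bar>1 + (y::real)\<bar> \<le> 1 + y + 2 * y^2"
proof -
  have e: "(y + 1/2)^2 = y^2 + y + 1/4" by (simp add: power2_eq_square algebra_simps)
  have "0 \<le> (y + 1/2)^2" by simp
  then have q: "0 \<le> y^2 + y + 1" using e by linarith
  show ?thesis
  proof (cases "1 + y \<ge> 0")
    case True
    then have "\<bar>1 + y\<bar> = 1 + y" by simp
    moreover have "0 \<le> y^2" by simp
    ultimately show ?thesis by linarith
  next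
    case False
    then have "\<bar>1 + y\<bar> = -(1 + y)" by simp
    then show ?thesis using q by linarith
  qed
qed

lemma step_bound:
  fixes B :: "real \<Rightarrow> 'a \<Rightarrow> real^'d" and G :: "real^'d \<Rightarrow> real^'d"
    and uv :: "real^'d \<Rightarrow> real \<times> (real^'d)"
    and f :: "real^'d \<Rightarrow> real \<Rightarrow> real^'d \<Rightarrow> real"
  assumes bm: "brownian_motion P B" and T: "T > 0" and N: "N \<ge> 1"
  and G: "G \<in> borel_measurable borel"
  and H1: "integrable P (\<lambda>\<omega>. norm (gB G B T N k \<omega> - dB B T N k \<omega>) powr 1) \<and>
     (\<integral>\<omega>. norm (gB G B T N k \<omega> - dB B T N k \<omega>) powr 1 \<partial>P) powr (1/1) \<le> c1 * sqrt (T / real N) * m"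
  and H2: "integrable P (\<lambda>\<omega>. norm (gB G B T N k \<omega> - dB B T N k \<omega>) powr 2) \<and>
     (\<integral>\<omega>. norm (gB G B T N k \<omega> - dB B T N k \<omega>) powr 2 \<partial>P) powr (1/2) \<le> c2 * sqrt (T / real N) * m"
  and m: "0 \<le> m" "m^2 \<le> T / real N" "m \<le> 1"
  and d: "\<delta> > 0"
  and Lf: "\<And>x y z z'. \<bar>f x y z - f x y z'\<bar> \<le> L * norm (z - z')"
  and Lam: "\<And>x y. \<bar>f x y 0\<bar> \<le> Lam * (1 + \<bar>y\<bar>)" and Lam0: "Lam \<ge> 0"
  and bd: "\<And>y. \<bar>fst (uv y)\<bar> \<le> A"
  shows "\<bar>fst (uv_step b f \<sigma> P B G T N \<delta> R \<rho> k uv x)\<bar>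
     \<le> A * (1 + (\<bar>L\<bar> * \<bar>c1\<bar> + 2 * L^2 * (2 * real CARD('d) + 2 * c2^2)) * (T / real N))
        + Lam * (T / real N) * (1 + A)"
proof -
  define h where "h = T / real N"
  have h: "h > 0" unfolding h_def using T N by auto
  note W = bm_g[OF bm T N G H1 H2 m]
  interpret prob_space P using bm_dB(1)[OF bm T N] .
  define g where "g = gB G B T N k"
  have mg[measurable]: "g \<in> borel_measurable P" unfolding g_def by (rule W(1))
  have ig: "integrable P g" unfolding g_def by (rule W(2))
  define u1 where "u1 = fst (uv x)"
  define vh where "vh = vhat_step \<sigma> P B G T N \<delta> R \<rho> k uv x"
  define nxt where "nxt = (\<lambda>\<omega>. fst (uv (Pi_i \<delta> R \<rho> (Suc k) (x + trans b \<sigma> B G T N k u1 vh x \<omega>))))"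
  define w where "w = (\<integral>\<omega>. nxt \<omega> *\<^sub>R g \<omega> \<partial>P)"
  define vb where "vb = (1 / h) *\<^sub>R w"
  have ub: "fst (uv_step b f \<sigma> P B G T N \<delta> R \<rho> k uv x) = (\<integral>\<omega>. nxt \<omega> \<partial>P) + f x u1 vb * h"
    unfolding uv_step_def Let_def nxt_def vb_def w_def h_def u1_def vh_def g_def by simp
  have A0: "A \<ge> 0" using bd[of x] by simp
  have mmv: "((*v) (\<sigma> x u1)) \<in> borel_measurable borel"
    by (rule borel_measurable_continuous_onI[OF matrix_vector_mult_linear_continuous_on])
  have mxi: "(\<lambda>\<omega>. x + trans b \<sigma> B G T N k u1 vh x \<omega>) \<in> borel_measurable P"
  proof -
    have "(\<lambda>\<omega>. \<sigma> x u1 *v g \<omega>) \<in> borel_measurable P" using measurable_compose[OF mg mmv] by simp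
    then show ?thesis unfolding trans_def g_def[symmetric] by measurable
  qed
  have mn[measurable]: "nxt \<in> borel_measurable P"
    unfolding nxt_def by (rule meas_Pi_comp[OF d mxi])
  have nb: "\<And>\<omega>. \<bar>nxt \<omega>\<bar> \<le> A" unfolding nxt_def by (rule bd)
  have in1: "integrable P nxt"
    by (rule integrable_const_bound[where B=A]) (auto simp: nb)
  have ing: "integrable P (\<lambda>\<omega>. nxt \<omega> *\<^sub>R g \<omega>)"
  proof (rule Bochner_Integration.integrable_bound[where f="\<lambda>\<omega>. A * norm (g \<omega>)"])
    show "integrable P (\<lambda>\<omega>. A * norm (g \<omega>))" using ig by auto
    show "AE \<omega> in P. norm (nxt \<omega> *\<^sub>R g \<omega>) \<le> norm (A * norm (g \<omega>))"
      using nb A0 by (intro AE_I2) (simp add: abs_mult mult_right_mono)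
  qed measurable
  define D where "D = f x u1 vb - f x u1 0"
  have Db: "\<bar>D\<bar> \<le> \<bar>L\<bar> * norm vb" unfolding D_def using Lf[of x u1 vb 0]
    by (smt (verit) mult_right_mono norm_ge_zero abs_ge_self diff_zero)
  define \<beta> where "\<beta> = (if w = 0 then 0 else (h * D / (norm w)^2) *\<^sub>R w)"
  have bw: "\<beta> \<bullet> w = h * D"
  proof (cases "w = 0")
    case True
    then have "vb = 0" unfolding vb_def by simp
    then have "D = 0" unfolding D_def by simp
    then show ?thesis using True unfolding \<beta>_def by simp
  next
    case False
    then show ?thesis unfolding \<beta>_def by (simp add: power2_norm_eq_inner)
  qed
  have nbeta: "norm \<beta> \<le> \<bar>L\<bar>"
  proof (cases "w = 0")
    case True then show ?thesis unfolding \<beta>_def by simp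
  next
    case False
    then have nw: "norm w > 0" by simp
    have nvb: "norm vb = norm w / h" unfolding vb_def using h by simp
    have "norm \<beta> = h * \<bar>D\<bar> / norm w" unfolding \<beta>_def using False h
      by (simp add: abs_mult power2_eq_square)
    also have "\<dots> \<le> h * (\<bar>L\<bar> * (norm w / h)) / norm w"
      using Db nvb h nw by (intro divide_right_mono mult_left_mono) auto
    also have "\<dots> = \<bar>L\<bar>" using h nw by simp
    finally show ?thesis .
  qed
  define y where "y = (\<lambda>\<omega>. \<beta> \<bullet> g \<omega>)"
  have iy: "integrable P y" unfolding y_def using ig by auto
  have Iy: "\<bar>\<integral>\<omega>. y \<omega> \<partial>P\<bar> \<le> \<bar>L\<bar> * \<bar>c1\<bar> * h"
  proof -
    have "\<bar>\<integral>\<omega>. y \<omega> \<partial>P\<bar> \<le> norm \<beta> * \<bar>c1\<bar> * h" unfolding y_def g_def h_def by (rule W(5))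
    also have "\<dots> \<le> \<bar>L\<bar> * \<bar>c1\<bar> * h" using nbeta h by (intro mult_right_mono) auto
    finally show ?thesis .
  qed
  have ig2: "integrable P (\<lambda>\<omega>. (norm (g \<omega>))^2)" unfolding g_def by (rule W(3))
  have Ig2: "(\<integral>\<omega>. (norm (g \<omega>))^2 \<partial>P) \<le> (2 * real CARD('d) + 2 * c2^2) * h"
    unfolding g_def h_def by (rule W(4))
  have bwi: "\<beta> \<bullet> w = (\<integral>\<omega>. nxt \<omega> * y \<omega> \<partial>P)"
  proof -
    have "(\<integral>\<omega>. \<beta> \<bullet> (nxt \<omega> *\<^sub>R g \<omega>) \<partial>P) = \<beta> \<bullet> w" unfolding w_def
      by (rule integral_inner_right) (rule ing)
    then have "\<beta> \<bullet> w = (\<integral>\<omega>. \<beta> \<bullet> (nxt \<omega> *\<^sub>R g \<omega>) \<partial>P)" by simp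
    also have "\<dots> = (\<integral>\<omega>. nxt \<omega> * y \<omega> \<partial>P)" unfolding y_def by (simp only: inner_scaleR_right)
    finally show ?thesis .
  qed
  have iny: "integrable P (\<lambda>\<omega>. nxt \<omega> * y \<omega>)"
  proof -
    have "integrable P (\<lambda>\<omega>. \<beta> \<bullet> (nxt \<omega> *\<^sub>R g \<omega>))" by (rule integrable_inner_right) (rule ing)
    then show ?thesis unfolding y_def by (simp only: inner_scaleR_right)
  qed
  have main: "(\<integral>\<omega>. nxt \<omega> \<partial>P) + \<beta> \<bullet> w = (\<integral>\<omega>. nxt \<omega> * (1 + y \<omega>) \<partial>P)"
    unfolding bwi using in1 iny by (simp add: distrib_left)
  have i1y: "integrable P (\<lambda>\<omega>. \<bar>1 + y \<omega>\<bar>)" using iy by auto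
  have "\<bar>\<integral>\<omega>. nxt \<omega> * (1 + y \<omega>) \<partial>P\<bar> \<le> (\<integral>\<omega>. \<bar>nxt \<omega> * (1 + y \<omega>)\<bar> \<partial>P)"
    by (rule integral_abs_bound)
  also have "\<dots> \<le> (\<integral>\<omega>. A * \<bar>1 + y \<omega>\<bar> \<partial>P)"
  proof (rule integral_mono)
    show "integrable P (\<lambda>\<omega>. \<bar>nxt \<omega> * (1 + y \<omega>)\<bar>)" using in1 iny by (auto simp: distrib_left)
    show "integrable P (\<lambda>\<omega>. A * \<bar>1 + y \<omega>\<bar>)" using i1y by auto
    fix \<omega> show "\<bar>nxt \<omega> * (1 + y \<omega>)\<bar> \<le> A * \<bar>1 + y \<omega>\<bar>"
      using nb[of \<omega>] by (simp add: abs_mult mult_right_mono)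
  qed
  also have "\<dots> = A * (\<integral>\<omega>. \<bar>1 + y \<omega>\<bar> \<partial>P)" by simp
  also have "\<dots> \<le> A * (1 + (\<bar>L\<bar> * \<bar>c1\<bar> + 2 * L^2 * (2 * real CARD('d) + 2 * c2^2)) * h)"
  proof (rule mult_left_mono[OF _ A0])
    have "(\<integral>\<omega>. \<bar>1 + y \<omega>\<bar> \<partial>P) \<le> (\<integral>\<omega>. 1 + y \<omega> + 2 * L^2 * (norm (g \<omega>))^2 \<partial>P)"
    proof (rule integral_mono[OF i1y])
      show "integrable P (\<lambda>\<omega>. 1 + y \<omega> + 2 * L^2 * (norm (g \<omega>))^2)" using iy ig2 by auto
      fix \<omega>
      have "(y \<omega>)^2 \<le> (norm \<beta> * norm (g \<omega>))^2" unfolding y_def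
        by (metis Cauchy_Schwarz_ineq2 abs_ge_zero power_mono real_norm_def norm_ge_zero order_trans abs_ge_self power2_abs)
      also have "\<dots> \<le> (\<bar>L\<bar> * norm (g \<omega>))^2" using nbeta by (intro power_mono mult_right_mono) auto
      finally have "(y \<omega>)^2 \<le> L^2 * (norm (g \<omega>))^2" by (simp add: power_mult_distrib)
      then show "\<bar>1 + y \<omega>\<bar> \<le> 1 + y \<omega> + 2 * L^2 * (norm (g \<omega>))^2" using abs1_le[of "y \<omega>"] by linarith
    qed
    also have "\<dots> = 1 + (\<integral>\<omega>. y \<omega> \<partial>P) + 2 * L^2 * (\<integral>\<omega>. (norm (g \<omega>))^2 \<partial>P)"
      using iy ig2 prob_space.prob_space[OF bm_dB(1)[OF bm T N]] by simp
    also have "\<dots> \<le> 1 + \<bar>L\<bar> * \<bar>c1\<bar> * h + 2 * L^2 * ((2 * real CARD('d) + 2 * c2^2) * h)"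
      using Iy Ig2 by (intro add_mono mult_left_mono) auto
    finally show "(\<integral>\<omega>. \<bar>1 + y \<omega>\<bar> \<partial>P) \<le> 1 + (\<bar>L\<bar> * \<bar>c1\<bar> + 2 * L^2 * (2 * real CARD('d) + 2 * c2^2)) * h"
      by (simp add: algebra_simps)
  qed
  finally have E1: "\<bar>(\<integral>\<omega>. nxt \<omega> \<partial>P) + \<beta> \<bullet> w\<bar> \<le> A * (1 + (\<bar>L\<bar> * \<bar>c1\<bar> + 2 * L^2 * (2 * real CARD('d) + 2 * c2^2)) * h)"
    unfolding main .
  have E2: "\<bar>f x u1 0 * h\<bar> \<le> Lam * h * (1 + A)"
  proof -
    have "\<bar>f x u1 0\<bar> \<le> Lam * (1 + A)" using Lam[of x u1] bd[of x] Lam0 unfolding u1_def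
      by (smt (verit) mult_left_mono)
    then show ?thesis using h by (simp add: abs_mult mult_right_mono mult.commute mult.left_commute)
  qed
  have "fst (uv_step b f \<sigma> P B G T N \<delta> R \<rho> k uv x) = ((\<integral>\<omega>. nxt \<omega> \<partial>P) + \<beta> \<bullet> w) + f x u1 0 * h"
    unfolding ub bw D_def by (simp add: algebra_simps)
  then show ?thesis using E1 E2 unfolding h_def by (smt (verit))
qed



lemma m_facts:
  fixes Mq :: nat and h :: real
  assumes "Mq \<ge> 1" "real Mq powr (- 2 / real CARD('d)) < h"
  shows "0 \<le> real Mq powr (- 1 / real CARD('d))"
    and "(real Mq powr (- 1 / real CARD('d)))^2 \<le> h"
    and "real Mq powr (- 1 / real CARD('d)) \<le> 1"
    and "(real Mq powr (- 1 / real CARD('d)))^2 = real Mq powr (- 2 / real CARD('d))"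
proof -
  have M: "real Mq > 0" using assms by simp
  show "0 \<le> real Mq powr (- 1 / real CARD('d))" by simp
  show e: "(real Mq powr (- 1 / real CARD('d)))^2 = real Mq powr (- 2 / real CARD('d))"
    using M by (simp add: power2_eq_square powr_add[symmetric])
  then show "(real Mq powr (- 1 / real CARD('d)))^2 \<le> h" using assms by simp
  have "real Mq powr (- 1 / real CARD('d)) = 1 / real Mq powr (1 / real CARD('d))"
    using M by (simp add: powr_minus_divide)
  moreover have "1 \<le> real Mq powr (1 / real CARD('d))" using assms by (intro ge_one_powr_ge_zero) auto
  ultimately show "real Mq powr (- 1 / real CARD('d)) \<le> 1" using assms by (simp add: divide_le_eq_1)
qed

lemma ubar_bound:
  fixes B :: "real \<Rightarrow> 'a \<Rightarrow> real^'d" and G :: "real^'d \<Rightarrow> real^'d"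
    and f :: "real^'d \<Rightarrow> real \<Rightarrow> real^'d \<Rightarrow> real" and Cq :: "real \<Rightarrow> real"
  assumes AA: "assumption_A L Lam lam K \<alpha> b f \<sigma> H DH"
  and bm: "brownian_motion P B" and T: "T > 0" and N: "N \<ge> 1"
  and G: "G \<in> borel_measurable borel"
  and HQ: "\<forall>q\<ge>1. \<forall>k<N.
          integrable P (\<lambda>\<omega>. norm (gB G B T N k \<omega> - dB B T N k \<omega>) powr q) \<and>
          (\<integral>\<omega>. norm (gB G B T N k \<omega> - dB B T N k \<omega>) powr q \<partial>P) powr (1 / q)
            \<le> Cq q * sqrt (T / real N) * real Mq powr (- 1 / real CARD('d))"
  and M: "Mq \<ge> 1" and Mh: "real Mq powr (- 2 / real CARD('d)) < T / real N"
  and d: "\<delta> > 0"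
  and j: "j \<le> N"
  shows "\<bar>fst (uvj b f \<sigma> H DH P B G T N \<delta> R \<rho> j x)\<bar>
     \<le> (\<bar>K\<bar> + 1) * exp ((\<bar>L\<bar> * \<bar>Cq 1\<bar> + 2 * L^2 * (2 * real CARD('d) + 2 * (Cq 2)^2) + \<bar>Lam\<bar>) * T)"
proof -
  define h where "h = T / real N"
  have h: "h > 0" unfolding h_def using T N by auto
  define C where "C = \<bar>L\<bar> * \<bar>Cq 1\<bar> + 2 * L^2 * (2 * real CARD('d) + 2 * (Cq 2)^2)"
  have C0: "C \<ge> 0" unfolding C_def by simp
  define C' where "C' = C + \<bar>Lam\<bar>"
  define a where "a = (\<lambda>j::nat. (\<bar>K\<bar> + 1) * (1 + C' * h)^j - 1)"
  note mf = m_facts[OF M Mh]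
  have Lf: "\<bar>f x y z - f x y z'\<bar> \<le> L * norm (z - z')" for x y z z'
  proof -
    have "\<bar>f x y z - f x y z'\<bar> \<le> L * (norm (x - x) + \<bar>y - y\<bar> + norm (z - z'))"
      using AA[unfolded assumption_A_def, THEN conjunct1, rule_format, of x y z x y z'] by (rule conjunct2)
    then show ?thesis by simp
  qed
  have Lam': "\<And>x y. \<bar>f x y 0\<bar> \<le> \<bar>Lam\<bar> * (1 + \<bar>y\<bar>)"
  proof -
    fix x y
    have "norm (b x y 0) + \<bar>f x y 0\<bar> + norm (\<sigma> x y) \<le> Lam * (1 + \<bar>y\<bar> + norm (0::real^'d))"
      using AA[unfolded assumption_A_def, THEN conjunct2, THEN conjunct2, THEN conjunct2, THEN conjunct1, rule_format, of x y 0] .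
    moreover have "norm (b x y 0) \<ge> 0" "norm (\<sigma> x y) \<ge> 0" by simp_all
    ultimately have "\<bar>f x y 0\<bar> \<le> Lam * (1 + \<bar>y\<bar>)" by (simp only: norm_zero add_0_right)
    also have "\<dots> \<le> \<bar>Lam\<bar> * (1 + \<bar>y\<bar>)" by (intro mult_right_mono) auto
    finally show "\<bar>f x y 0\<bar> \<le> \<bar>Lam\<bar> * (1 + \<bar>y\<bar>)" .
  qed
  have HK: "\<bar>H x\<bar> \<le> \<bar>K\<bar>" for x
  proof -
    obtain D2H where "\<forall>x. \<bar>H x\<bar> \<le> K \<and> norm (DH x) \<le> K \<and> norm (D2H x :: real^'d^'d) \<le> K"
      using AA[unfolded assumption_A_def, THEN conjunct2, THEN conjunct2, THEN conjunct2, THEN conjunct2, THEN conjunct2] by blast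
    then have "\<bar>H x\<bar> \<le> K" by blast
    then show ?thesis by simp
  qed
  have ind: "\<forall>x. \<bar>fst (uvj b f \<sigma> H DH P B G T N \<delta> R \<rho> j x)\<bar> \<le> a j" using j
  proof (induction j)
    case 0
    then show ?case unfolding a_def using HK by simp
  next
    case (Suc j)
    then have IH: "\<And>y. \<bar>fst (uvj b f \<sigma> H DH P B G T N \<delta> R \<rho> j y)\<bar> \<le> a j" by simp
    have kN: "N - Suc j < N" using Suc.prems by simp
    have q12: "(1::real) \<ge> 1" "(2::real) \<ge> 1" by simp_all
    have H1: "integrable P (\<lambda>\<omega>. norm (gB G B T N (N - Suc j) \<omega> - dB B T N (N - Suc j) \<omega>) powr 1) \<and>
     (\<integral>\<omega>. norm (gB G B T N (N - Suc j) \<omega> - dB B T N (N - Suc j) \<omega>) powr 1 \<partial>P) powr (1/1) \<le> Cq 1 * sqrt (T / real N) * real Mq powr (- 1 / real CARD('d))"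
      using HQ kN q12 by blast
    have H2: "integrable P (\<lambda>\<omega>. norm (gB G B T N (N - Suc j) \<omega> - dB B T N (N - Suc j) \<omega>) powr 2) \<and>
     (\<integral>\<omega>. norm (gB G B T N (N - Suc j) \<omega> - dB B T N (N - Suc j) \<omega>) powr 2 \<partial>P) powr (1/2) \<le> Cq 2 * sqrt (T / real N) * real Mq powr (- 1 / real CARD('d))"
      using HQ kN q12 by blast
    show ?case
    proof
      fix x
      have "\<bar>fst (uvj b f \<sigma> H DH P B G T N \<delta> R \<rho> (Suc j) x)\<bar>
          \<le> a j * (1 + C * h) + \<bar>Lam\<bar> * h * (1 + a j)"
        unfolding uvj.simps C_def h_def
        by (rule step_bound[OF bm T N G H1 H2 mf(1) mf(2) mf(3) d Lf Lam' abs_ge_zero IH])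
      also have "\<dots> \<le> a (Suc j)"
      proof -
        have "a (Suc j) = (a j + 1) * (1 + C' * h) - 1" unfolding a_def by simp
        moreover have "C * h \<ge> 0" using C0 h by simp
        ultimately show ?thesis unfolding C'_def by (simp add: algebra_simps)
      qed
      finally show "\<bar>fst (uvj b f \<sigma> H DH P B G T N \<delta> R \<rho> (Suc j) x)\<bar> \<le> a (Suc j)" .
    qed
  qed
  have aj: "a j \<le> (\<bar>K\<bar> + 1) * exp (C' * T)"
  proof -
    have C'0: "C' \<ge> 0" unfolding C'_def using C0 by simp
    have "(1 + C' * h)^j \<le> (exp (C' * h))^j"
      using C'0 h by (intro power_mono) (auto simp: exp_ge_add_one_self add_nonneg_nonneg)
    also have "\<dots> = exp (real j * (C' * h))" by (simp add: exp_of_nat_mult)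
    also have "\<dots> \<le> exp (C' * T)"
    proof -
      have "real j * h \<le> real N * h" using j h by (intro mult_right_mono) auto
      also have "\<dots> = T" unfolding h_def using N by simp
      finally have "real j * h \<le> T" .
      then have "C' * (real j * h) \<le> C' * T" using C'0 by (intro mult_left_mono)
      then show ?thesis by (simp add: mult.commute mult.left_commute)
    qed
    finally have "(1 + C' * h)^j \<le> exp (C' * T)" .
    then have "(\<bar>K\<bar> + 1) * (1 + C' * h)^j \<le> (\<bar>K\<bar> + 1) * exp (C' * T)" by (intro mult_left_mono) auto
    then show ?thesis unfolding a_def by simp
  qed
  then show ?thesis using order_trans[OF ind[rule_format] aj] unfolding C'_def C_def by blast
qed



lemma Xleft_eq:
  fixes B :: "real \<Rightarrow> 'a \<Rightarrow> real^'d" and b f \<sigma> H DH G \<delta> R \<rho> x0 and i :: nat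
  assumes bm: "brownian_motion P B" and T: "T > 0" and N: "N \<ge> 1" and \<omega>: "\<omega> \<in> space P"
  defines "X \<equiv> Xd b f \<sigma> H DH P B G T N \<delta> R \<rho> x0 i \<omega>"
  defines "u \<equiv> ubar b f \<sigma> H DH P B G T N \<delta> R \<rho> (Suc i) X"
  defines "bb \<equiv> b X u (vhat b f \<sigma> H DH P B G T N \<delta> R \<rho> i X)"
  shows "Xleft b f \<sigma> H DH P B G T N \<delta> R \<rho> x0 (tgrid T N (Suc i)) \<omega>
     = X + (T / real N) *\<^sub>R bb + \<sigma> X u *v (B (tgrid T N (Suc i)) \<omega> - B (tgrid T N i) \<omega>)"
proof -
  define h where "h = T / real N"
  have h: "h > 0" unfolding h_def using T N by auto
  define t where "t = tgrid T N (Suc i)"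
  define t0 where "t0 = tgrid T N i"
  have t0: "t0 = real i * h" unfolding t0_def tgrid_def h_def by simp
  have t: "t = real i * h + h" unfolding t_def tgrid_def h_def by (simp add: distrib_right add_divide_distrib)
  have t00: "t0 \<ge> 0" using t0 h by simp
  have tt0: "t0 < t" using t t0 h by simp
  have tpos: "t > 0" using t00 tt0 by simp
  have ev: "\<forall>\<^sub>F s in at_left t. Xc b f \<sigma> H DH P B G T N \<delta> R \<rho> x0 s \<omega>
      = X + (s - t0) *\<^sub>R bb + \<sigma> X u *v (B s \<omega> - B t0 \<omega>)"
    using eventually_at_left_real[OF tt0]
  proof (rule eventually_mono)
    fix s assume s: "s \<in> {t0<..<t}"
    have "real i < s / h" using s t0 h by (simp add: field_simps)
    moreover have "s / h < real i + 1" using s t h by (simp add: field_simps)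
    ultimately have "\<lfloor>s / h\<rfloor> = int i" by (intro floor_unique) auto
    then have "nat \<lfloor>s / h\<rfloor> = i" by simp
    then show "Xc b f \<sigma> H DH P B G T N \<delta> R \<rho> x0 s \<omega> = X + (s - t0) *\<^sub>R bb + \<sigma> X u *v (B s \<omega> - B t0 \<omega>)"
      unfolding Xc_def Let_def h_def[symmetric] X_def u_def bb_def t0_def by simp
  qed
  have cont: "continuous_on {0..} (\<lambda>s. B s \<omega>)" using bm \<omega> unfolding brownian_motion_def by auto
  have "((\<lambda>s. B s \<omega>) \<longlongrightarrow> B t \<omega>) (at t within {0..})"
    using cont tpos unfolding continuous_on_def by auto
  then have "((\<lambda>s. B s \<omega>) \<longlongrightarrow> B t \<omega>) (at t within {0..t})"
    by (rule tendsto_within_subset) auto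
  then have lB: "((\<lambda>s. B s \<omega>) \<longlongrightarrow> B t \<omega>) (at_left t)"
    using at_within_Icc_at_left[OF tpos] by simp
  have "((\<lambda>s. X + (s - t0) *\<^sub>R bb + \<sigma> X u *v (B s \<omega> - B t0 \<omega>)) \<longlongrightarrow>
      X + (t - t0) *\<^sub>R bb + \<sigma> X u *v (B t \<omega> - B t0 \<omega>)) (at_left t)"
  proof -
    have l1: "((\<lambda>s. B s \<omega> - B t0 \<omega>) \<longlongrightarrow> B t \<omega> - B t0 \<omega>) (at_left t)"
      by (intro tendsto_diff lB tendsto_const)
    have l2: "((\<lambda>s. \<sigma> X u *v (B s \<omega> - B t0 \<omega>)) \<longlongrightarrow> \<sigma> X u *v (B t \<omega> - B t0 \<omega>)) (at_left t)"
      by (rule bounded_linear.tendsto[OF matrix_vector_mul_bounded_linear l1])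
    have l3: "((\<lambda>s. (s - t0) *\<^sub>R bb) \<longlongrightarrow> (t - t0) *\<^sub>R bb) (at_left t)"
      by (intro tendsto_scaleR tendsto_diff tendsto_ident_at tendsto_const)
    show ?thesis by (intro tendsto_add tendsto_const l2 l3)
  qed
  then have "((\<lambda>s. Xc b f \<sigma> H DH P B G T N \<delta> R \<rho> x0 s \<omega>) \<longlongrightarrow>
      X + (t - t0) *\<^sub>R bb + \<sigma> X u *v (B t \<omega> - B t0 \<omega>)) (at_left t)"
    using tendsto_cong[OF ev] by blast
  then have "Xleft b f \<sigma> H DH P B G T N \<delta> R \<rho> x0 t \<omega> = X + (t - t0) *\<^sub>R bb + \<sigma> X u *v (B t \<omega> - B t0 \<omega>)"
    unfolding Xleft_def by (rule tendsto_Lim[OF trivial_limit_at_left_real])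
  moreover have "t - t0 = T / real N" using t t0 h_def by simp
  ultimately show ?thesis unfolding t_def t0_def by simp
qed



lemma clamp_close:
  fixes \<delta> M y p :: real
  assumes "\<delta> > 0" "- M - \<delta>/2 \<le> y" "y < M + \<delta>/2" "\<bar>p - y\<bar> \<le> \<delta>/2"
  shows "\<bar>min (max p (-M)) M - y\<bar> \<le> \<delta>"
proof -
  have h1: "p - y \<le> \<delta>/2" "y - p \<le> \<delta>/2"
    using assms(4) abs_ge_self[of "p - y"] abs_ge_minus_self[of "p - y"] by linarith+
  show ?thesis unfolding min_def max_def abs_le_iff using assms(1-3) h1 by auto
qed

lemma Pinf_close:
  fixes \<delta> :: real assumes "\<delta> > 0"
  shows "\<bar>\<delta> * of_int \<lfloor>y / \<delta> + 1/2\<rfloor> - y\<bar> \<le> \<delta>/2"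
proof -
  have a: "of_int \<lfloor>y / \<delta> + 1/2\<rfloor> \<le> y / \<delta> + 1/2" by (rule of_int_floor_le)
  have b: "y / \<delta> + 1/2 < of_int \<lfloor>y / \<delta> + 1/2\<rfloor> + 1" by (rule real_of_int_floor_add_one_gt)
  have e: "\<delta> * (y / \<delta> + 1/2) = y + \<delta>/2" using assms by (simp add: field_simps)
  have a': "\<delta> * of_int \<lfloor>y / \<delta> + 1/2\<rfloor> \<le> y + \<delta>/2"
    using mult_left_mono[OF a, of \<delta>] assms e by simp
  have b': "y + \<delta>/2 < \<delta> * of_int \<lfloor>y / \<delta> + 1/2\<rfloor> + \<delta>"
    using mult_strict_left_mono[OF b assms] assms e by (simp add: distrib_left)
  have "\<delta> * of_int \<lfloor>y / \<delta> + 1/2\<rfloor> - y \<le> \<delta>/2" using a' by linarith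
  moreover have "- (\<delta> * of_int \<lfloor>y / \<delta> + 1/2\<rfloor> - y) \<le> \<delta>/2" using b' by linarith
  ultimately show ?thesis using abs_le_iff by blast
qed

lemma Pi_close:
  fixes Y :: "real^'d"
  assumes d: "\<delta> > 0" and Y: "Y \<in> Delta_i \<delta> R \<rho> k"
  shows "norm (Pi_i \<delta> R \<rho> k Y - Y) \<le> real CARD('d) * \<delta>"
proof -
  have c: "\<bar>(Pi_i \<delta> R \<rho> k Y - Y) $ j\<bar> \<le> \<delta>" for j :: 'd
  proof -
    have "- \<delta> * of_int \<lfloor>radius R \<rho> k / \<delta>\<rfloor> - \<delta>/2 \<le> Y $ j \<and> Y $ j < \<delta> * of_int \<lfloor>radius R \<rho> k / \<delta>\<rfloor> + \<delta>/2"
      using Y unfolding Delta_i_def by blast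
    then show ?thesis unfolding Pi_i_def clampQ_def Pi_inf_def
      using clamp_close[OF d _ _ Pinf_close[OF d, of "Y $ j"], of "\<delta> * of_int \<lfloor>radius R \<rho> k / \<delta>\<rfloor>"]
      by simp
  qed
  have "norm (Pi_i \<delta> R \<rho> k Y - Y) \<le> (\<Sum>j\<in>UNIV. \<bar>(Pi_i \<delta> R \<rho> k Y - Y) $ j\<bar>)" by (rule norm_le_l1_cart)
  also have "\<dots> \<le> (\<Sum>j\<in>(UNIV::'d set). \<delta>)" by (rule sum_mono) (rule c)
  also have "\<dots> = real CARD('d) * \<delta>" by simp
  finally show ?thesis .
qed

lemma mv_norm:
  fixes A :: "real^'n^'m"
  shows "norm (A *v v) \<le> real CARD('m) * norm A * norm v"
proof -
  have "norm (A *v v) \<le> (\<Sum>i\<in>UNIV. \<bar>(A *v v) $ i\<bar>)" by (rule norm_le_l1_cart)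
  also have "\<dots> \<le> (\<Sum>i\<in>(UNIV::'m set). norm A * norm v)"
  proof (rule sum_mono)
    fix i
    have "\<bar>(A *v v) $ i\<bar> \<le> norm (A $ i) * norm v"
      by (simp add: matrix_mult_dot Cauchy_Schwarz_ineq2)
    also have "\<dots> \<le> norm A * norm v" by (intro mult_right_mono Finite_Cartesian_Product.norm_nth_le) auto
    finally show "\<bar>(A *v v) $ i\<bar> \<le> norm A * norm v" .
  qed
  also have "\<dots> = real CARD('m) * norm A * norm v" by simp
  finally show ?thesis .
qed



lemma jump_pt:
  fixes B :: "real \<Rightarrow> 'a \<Rightarrow> real^'d" and G :: "real^'d \<Rightarrow> real^'d"
    and f :: "real^'d \<Rightarrow> real \<Rightarrow> real^'d \<Rightarrow> real" and Cq :: "real \<Rightarrow> real"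
    and b :: "real^'d \<Rightarrow> real \<Rightarrow> real^'d \<Rightarrow> real^'d"
  assumes AA: "assumption_A L Lam lam K \<alpha> b f \<sigma> H DH"
  and bm: "brownian_motion P B" and T: "T > 0" and N: "N \<ge> 1"
  and G: "G \<in> borel_measurable borel"
  and HQ: "\<forall>q\<ge>1. \<forall>k<N.
          integrable P (\<lambda>\<omega>. norm (gB G B T N k \<omega> - dB B T N k \<omega>) powr q) \<and>
          (\<integral>\<omega>. norm (gB G B T N k \<omega> - dB B T N k \<omega>) powr q \<partial>P) powr (1 / q)
            \<le> Cq q * sqrt (T / real N) * real Mq powr (- 1 / real CARD('d))"
  and M: "Mq \<ge> 1" and Mh: "real Mq powr (- 2 / real CARD('d)) < T / real N"
  and d: "\<delta> > 0" and i: "i < N" and \<omega>: "\<omega> \<in> space P"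
  shows "indicator {\<omega>. ereal (tgrid T N (Suc i)) < tau_inf b f \<sigma> H DH P B G T N \<delta> R \<rho> x0 \<omega>} \<omega> *
         (norm (Xd b f \<sigma> H DH P B G T N \<delta> R \<rho> x0 (Suc i) \<omega>
                - Xleft b f \<sigma> H DH P B G T N \<delta> R \<rho> x0 (tgrid T N (Suc i)) \<omega>))\<^sup>2
     \<le> 2 * (real CARD('d) * \<delta>)^2 + 2 * (real CARD('d) * (\<bar>Lam\<bar> * (1 +
         (\<bar>K\<bar> + 1) * exp ((\<bar>L\<bar> * \<bar>Cq 1\<bar> + 2 * L^2 * (2 * real CARD('d) + 2 * (Cq 2)^2) + \<bar>Lam\<bar>) * T))))^2
        * (norm (gB G B T N i \<omega> - dB B T N i \<omega>))^2"
proof -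
  define Abar where "Abar = (\<bar>K\<bar> + 1) * exp ((\<bar>L\<bar> * \<bar>Cq 1\<bar> + 2 * L^2 * (2 * real CARD('d) + 2 * (Cq 2)^2) + \<bar>Lam\<bar>) * T)"
  define h where "h = T / real N"
  define X where "X = Xd b f \<sigma> H DH P B G T N \<delta> R \<rho> x0 i \<omega>"
  define u where "u = ubar b f \<sigma> H DH P B G T N \<delta> R \<rho> (Suc i) X"
  define bb where "bb = b X u (vhat b f \<sigma> H DH P B G T N \<delta> R \<rho> i X)"
  define S where "S = \<sigma> X u"
  define Y where "Y = Xstep b f \<sigma> H DH P B G T N \<delta> R \<rho> i X \<omega>"
  define Z where "Z = norm (gB G B T N i \<omega> - dB B T N i \<omega>)"
  have hXd: "Xd b f \<sigma> H DH P B G T N \<delta> R \<rho> x0 (Suc i) \<omega> = Pi_i \<delta> R \<rho> (Suc i) Y"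
    unfolding Y_def X_def by simp
  have hY: "Y = X + h *\<^sub>R bb + S *v gB G B T N i \<omega>"
    unfolding Y_def Xstep_def trans_def bb_def S_def u_def h_def by simp
  have hXl: "Xleft b f \<sigma> H DH P B G T N \<delta> R \<rho> x0 (tgrid T N (Suc i)) \<omega> = X + h *\<^sub>R bb + S *v dB B T N i \<omega>"
    unfolding h_def X_def bb_def S_def u_def dB_def by (rule Xleft_eq[OF bm T N \<omega>])
  have diff: "Xd b f \<sigma> H DH P B G T N \<delta> R \<rho> x0 (Suc i) \<omega> - Xleft b f \<sigma> H DH P B G T N \<delta> R \<rho> x0 (tgrid T N (Suc i)) \<omega>
      = (Pi_i \<delta> R \<rho> (Suc i) Y - Y) + S *v (gB G B T N i \<omega> - dB B T N i \<omega>)"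
    unfolding hXd hXl by (simp add: hY matrix_vector_mult_diff_distrib algebra_simps)
  have ub: "\<bar>u\<bar> \<le> Abar"
  proof -
    have "\<bar>fst (uvj b f \<sigma> H DH P B G T N \<delta> R \<rho> (N - Suc i) X)\<bar> \<le> Abar"
      unfolding Abar_def by (rule ubar_bound[OF AA bm T N G HQ M Mh d]) simp
    then show ?thesis unfolding u_def ubar_def .
  qed
  have A0: "Abar \<ge> 0" unfolding Abar_def by simp
  have nS: "norm S \<le> \<bar>Lam\<bar> * (1 + Abar)"
  proof -
    have "norm (b X u 0) + \<bar>f X u 0\<bar> + norm (\<sigma> X u) \<le> Lam * (1 + \<bar>u\<bar> + norm (0::real^'d))"
      using AA[unfolded assumption_A_def, THEN conjunct2, THEN conjunct2, THEN conjunct2, THEN conjunct1, rule_format, of X u 0] .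
    moreover have "norm (b X u 0) \<ge> 0" "\<bar>f X u 0\<bar> \<ge> 0" by simp_all
    ultimately have "norm S \<le> Lam * (1 + \<bar>u\<bar>)" unfolding S_def by (simp only: norm_zero add_0_right)
    also have "\<dots> \<le> \<bar>Lam\<bar> * (1 + \<bar>u\<bar>)" by (intro mult_right_mono) auto
    also have "\<dots> \<le> \<bar>Lam\<bar> * (1 + Abar)" using ub by (intro mult_left_mono) auto
    finally show ?thesis .
  qed
  define RHS where "RHS = 2 * (real CARD('d) * \<delta>)^2 + 2 * (real CARD('d) * (\<bar>Lam\<bar> * (1 + Abar)))^2 * Z^2"
  have R0: "RHS \<ge> 0" unfolding RHS_def by simp
  have main: "(norm (Xd b f \<sigma> H DH P B G T N \<delta> R \<rho> x0 (Suc i) \<omega> - Xleft b f \<sigma> H DH P B G T N \<delta> R \<rho> x0 (tgrid T N (Suc i)) \<omega>))\<^sup>2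
        \<le> RHS" if Yin: "Y \<in> Delta_i \<delta> R \<rho> (Suc i)"
  proof -
    have "norm (Xd b f \<sigma> H DH P B G T N \<delta> R \<rho> x0 (Suc i) \<omega> - Xleft b f \<sigma> H DH P B G T N \<delta> R \<rho> x0 (tgrid T N (Suc i)) \<omega>)
        \<le> norm (Pi_i \<delta> R \<rho> (Suc i) Y - Y) + norm (S *v (gB G B T N i \<omega> - dB B T N i \<omega>))"
      unfolding diff by (rule norm_triangle_ineq)
    also have "\<dots> \<le> real CARD('d) * \<delta> + real CARD('d) * (\<bar>Lam\<bar> * (1 + Abar)) * Z"
    proof (rule add_mono)
      show "norm (Pi_i \<delta> R \<rho> (Suc i) Y - Y) \<le> real CARD('d) * \<delta>" by (rule Pi_close[OF d Yin])
      have "norm (S *v (gB G B T N i \<omega> - dB B T N i \<omega>)) \<le> real CARD('d) * norm S * Z"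
        unfolding Z_def by (rule mv_norm)
      also have "\<dots> \<le> real CARD('d) * (\<bar>Lam\<bar> * (1 + Abar)) * Z"
        unfolding Z_def using nS by (intro mult_right_mono mult_left_mono) auto
      finally show "norm (S *v (gB G B T N i \<omega> - dB B T N i \<omega>)) \<le> real CARD('d) * (\<bar>Lam\<bar> * (1 + Abar)) * Z" .
    qed
    finally have n1: "norm (Xd b f \<sigma> H DH P B G T N \<delta> R \<rho> x0 (Suc i) \<omega> - Xleft b f \<sigma> H DH P B G T N \<delta> R \<rho> x0 (tgrid T N (Suc i)) \<omega>)
        \<le> real CARD('d) * \<delta> + real CARD('d) * (\<bar>Lam\<bar> * (1 + Abar)) * Z" .
    have "(norm (Xd b f \<sigma> H DH P B G T N \<delta> R \<rho> x0 (Suc i) \<omega> - Xleft b f \<sigma> H DH P B G T N \<delta> R \<rho> x0 (tgrid T N (Suc i)) \<omega>))\<^sup>2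
        \<le> (real CARD('d) * \<delta> + real CARD('d) * (\<bar>Lam\<bar> * (1 + Abar)) * Z)^2"
      by (rule power_mono[OF n1]) simp
    also have "\<dots> \<le> RHS" unfolding RHS_def using sq_sum_le[of "real CARD('d) * \<delta>" "real CARD('d) * (\<bar>Lam\<bar> * (1 + Abar)) * Z"] by (simp add: power_mult_distrib)
    finally show ?thesis .
  qed
  have "indicator {\<omega>. ereal (tgrid T N (Suc i)) < tau_inf b f \<sigma> H DH P B G T N \<delta> R \<rho> x0 \<omega>} \<omega> *
         (norm (Xd b f \<sigma> H DH P B G T N \<delta> R \<rho> x0 (Suc i) \<omega>
                - Xleft b f \<sigma> H DH P B G T N \<delta> R \<rho> x0 (tgrid T N (Suc i)) \<omega>))\<^sup>2 \<le> RHS"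
  proof (cases "ereal (tgrid T N (Suc i)) < tau_inf b f \<sigma> H DH P B G T N \<delta> R \<rho> x0 \<omega>")
    case True
    have Yin: "Y \<in> Delta_i \<delta> R \<rho> (Suc i)"
    proof (rule ccontr)
      assume nY: "Y \<notin> Delta_i \<delta> R \<rho> (Suc i)"
      have "ereal (tgrid T N (Suc i)) \<in> {ereal (tgrid T N k) | k. 1 \<le> k \<and> k \<le> N \<and>
            Xstep b f \<sigma> H DH P B G T N \<delta> R \<rho> (k - 1) (Xd b f \<sigma> H DH P B G T N \<delta> R \<rho> x0 (k - 1) \<omega>) \<omega>
              \<notin> Delta_i \<delta> R \<rho> k}"
        using nY i unfolding Y_def X_def by (intro CollectI exI[of _ "Suc i"]) auto
      then have "tau_inf b f \<sigma> H DH P B G T N \<delta> R \<rho> x0 \<omega> \<le> ereal (tgrid T N (Suc i))"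
        unfolding tau_inf_def by (rule Inf_lower)
      then show False using True by simp
    qed
    then show ?thesis using True main by simp
  next
    case False
    then show ?thesis using R0 by simp
  qed
  then show ?thesis unfolding RHS_def Z_def Abar_def .
qed



definition Abarc :: "real \<Rightarrow> real \<Rightarrow> real \<Rightarrow> real \<Rightarrow> real \<Rightarrow> real \<Rightarrow> real \<Rightarrow> real" where
  "Abarc d L Lam K c1 c2 T = (\<bar>K\<bar> + 1) * exp ((\<bar>L\<bar> * \<bar>c1\<bar> + 2 * L^2 * (2 * d + 2 * c2^2) + \<bar>Lam\<bar>) * T)"

definition C66c :: "real \<Rightarrow> real \<Rightarrow> real \<Rightarrow> real \<Rightarrow> real \<Rightarrow> real \<Rightarrow> real \<Rightarrow> real" where
  "C66c d L Lam K c1 c2 T = 2 * d^2 * T + 2 * (d * (\<bar>Lam\<bar> * (1 + Abarc d L Lam K c1 c2 T)))^2 * c2^2 * T + 1"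

lemma C66c_pos: "T > 0 \<Longrightarrow> C66c d L Lam K c1 c2 T > 0"
  unfolding C66c_def by (intro add_nonneg_pos add_nonneg_nonneg mult_nonneg_nonneg) auto

lemma final_arith:
  fixes N :: nat and T h \<delta> m c3 c2 C dd :: real
  assumes h: "h = T / real N" "T > 0" "N \<ge> 1" and c3: "c3 \<ge> 0" and dd: "dd \<ge> 0"
  and C: "C = 2 * dd * T + c3 * c2^2 * T + 1"
  shows "real N * (2 * dd * \<delta>^2 + c3 * c2^2 * h * m^2)
     \<le> C * h * ((\<delta> / h)\<^sup>2 + (h powr (- 1 / 2) * m)\<^sup>2)"
proof -
  have hp: "h > 0" using h by auto
  have Nh: "real N = T / h" using h hp by (simp add: field_simps)
  have L: "real N * (2 * dd * \<delta>^2 + c3 * c2^2 * h * m^2) = (2 * dd * T) * (\<delta>^2 / h) + (c3 * c2^2 * T) * m^2"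
    unfolding Nh using hp by (simp add: field_simps power2_eq_square)
  have pw: "(h powr (- 1 / 2))^2 = 1 / h"
  proof -
    have "(h powr (- 1 / 2))^2 = h powr (- 1 / 2) * h powr (- 1 / 2)" by (simp add: power2_eq_square)
    also have "\<dots> = h powr (- 1)" using hp by (simp add: powr_add[symmetric])
    also have "\<dots> = 1 / h" using hp by (simp add: powr_minus_divide)
    finally show ?thesis .
  qed
  have R: "C * h * ((\<delta> / h)\<^sup>2 + (h powr (- 1 / 2) * m)\<^sup>2) = C * (\<delta>^2 / h) + C * m^2"
  proof -
    have "(h powr (- 1 / 2) * m)\<^sup>2 = m^2 / h" by (simp only: power_mult_distrib pw) simp
    then show ?thesis using hp by (simp add: field_simps power2_eq_square)
  qed
  have a: "(2 * dd * T) * (\<delta>^2 / h) \<le> C * (\<delta>^2 / h)"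
    using hp h c3 dd C by (intro mult_right_mono) auto
  have b: "(c3 * c2^2 * T) * m^2 \<le> C * m^2"
    using hp h c3 dd C by (intro mult_right_mono) auto
  show ?thesis unfolding L R using a b by linarith
qed



lemma main_bound:
  fixes B :: "real \<Rightarrow> 'a \<Rightarrow> real^'d" and G :: "real^'d \<Rightarrow> real^'d"
    and f :: "real^'d \<Rightarrow> real \<Rightarrow> real^'d \<Rightarrow> real" and Cq :: "real \<Rightarrow> real"
    and b :: "real^'d \<Rightarrow> real \<Rightarrow> real^'d \<Rightarrow> real^'d"
  assumes AA: "assumption_A L Lam lam K \<alpha> b f \<sigma> H DH"
  and bm: "brownian_motion P B" and T: "T > 0" and N: "N \<ge> 1"
  and G: "G \<in> borel_measurable borel"
  and HQ: "\<forall>q\<ge>1. \<forall>k<N.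
          integrable P (\<lambda>\<omega>. norm (gB G B T N k \<omega> - dB B T N k \<omega>) powr q) \<and>
          (\<integral>\<omega>. norm (gB G B T N k \<omega> - dB B T N k \<omega>) powr q \<partial>P) powr (1 / q)
            \<le> Cq q * sqrt (T / real N) * real Mq powr (- 1 / real CARD('d))"
  and M: "Mq \<ge> 1" and Mh: "real Mq powr (- 2 / real CARD('d)) < T / real N"
  and d: "\<delta> > 0"
  shows "jump_sum b f \<sigma> H DH P B G T N \<delta> R \<rho> x0
        \<le> ennreal (C66c (real CARD('d)) L Lam K (Cq 1) (Cq 2) T * (T / real N) *
              ((\<delta> / (T / real N))\<^sup>2 + ((T / real N) powr (- 1 / 2) * real Mq powr (- 1 / real CARD('d)))\<^sup>2))"
proof -
  define h where "h = T / real N"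
  define m where "m = real Mq powr (- 1 / real CARD('d))"
  define Abar where "Abar = Abarc (real CARD('d)) L Lam K (Cq 1) (Cq 2) T"
  define c3 where "c3 = 2 * (real CARD('d) * (\<bar>Lam\<bar> * (1 + Abar)))^2"
  define K0 where "K0 = 2 * (real CARD('d) * \<delta>)^2 + c3 * ((Cq 2)^2 * h * m^2)"
  note mf = m_facts[OF M Mh]
  interpret prob_space P using bm_dB(1)[OF bm T N] .
  have c3: "c3 \<ge> 0" unfolding c3_def by simp
  have each: "(\<integral>\<^sup>+\<omega>. ennreal
        (indicator {\<omega>. ereal (tgrid T N (Suc i)) < tau_inf b f \<sigma> H DH P B G T N \<delta> R \<rho> x0 \<omega>} \<omega> *
         (norm (Xd b f \<sigma> H DH P B G T N \<delta> R \<rho> x0 (Suc i) \<omega>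
                - Xleft b f \<sigma> H DH P B G T N \<delta> R \<rho> x0 (tgrid T N (Suc i)) \<omega>))\<^sup>2) \<partial>P) \<le> ennreal K0"
    if i: "i < N" for i
  proof -
    have q12: "(1::real) \<ge> 1" "(2::real) \<ge> 1" by simp_all
    have H1: "integrable P (\<lambda>\<omega>. norm (gB G B T N i \<omega> - dB B T N i \<omega>) powr 1) \<and>
     (\<integral>\<omega>. norm (gB G B T N i \<omega> - dB B T N i \<omega>) powr 1 \<partial>P) powr (1/1) \<le> Cq 1 * sqrt (T / real N) * m"
      unfolding m_def using HQ i q12 by blast
    have H2: "integrable P (\<lambda>\<omega>. norm (gB G B T N i \<omega> - dB B T N i \<omega>) powr 2) \<and>
     (\<integral>\<omega>. norm (gB G B T N i \<omega> - dB B T N i \<omega>) powr 2 \<partial>P) powr (1/2) \<le> Cq 2 * sqrt (T / real N) * m"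
      unfolding m_def using HQ i q12 by blast
    note W = bm_g[OF bm T N G H1 H2 mf(1)[folded m_def] mf(2)[folded m_def] mf(3)[folded m_def]]
    define Z where "Z = (\<lambda>\<omega>. (norm (gB G B T N i \<omega> - dB B T N i \<omega>))^2)"
    have iZ: "integrable P Z" unfolding Z_def by (rule W(6))
    have IZ: "(\<integral>\<omega>. Z \<omega> \<partial>P) \<le> (Cq 2)^2 * h * m^2" unfolding Z_def h_def by (rule W(7))
    have "(\<integral>\<^sup>+\<omega>. ennreal
        (indicator {\<omega>. ereal (tgrid T N (Suc i)) < tau_inf b f \<sigma> H DH P B G T N \<delta> R \<rho> x0 \<omega>} \<omega> *
         (norm (Xd b f \<sigma> H DH P B G T N \<delta> R \<rho> x0 (Suc i) \<omega>
                - Xleft b f \<sigma> H DH P B G T N \<delta> R \<rho> x0 (tgrid T N (Suc i)) \<omega>))\<^sup>2) \<partial>P)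
        \<le> (\<integral>\<^sup>+\<omega>. ennreal (2 * (real CARD('d) * \<delta>)^2 + c3 * Z \<omega>) \<partial>P)"
    proof (rule nn_integral_mono)
      fix \<omega> assume \<omega>: "\<omega> \<in> space P"
      show "ennreal
        (indicator {\<omega>. ereal (tgrid T N (Suc i)) < tau_inf b f \<sigma> H DH P B G T N \<delta> R \<rho> x0 \<omega>} \<omega> *
         (norm (Xd b f \<sigma> H DH P B G T N \<delta> R \<rho> x0 (Suc i) \<omega>
                - Xleft b f \<sigma> H DH P B G T N \<delta> R \<rho> x0 (tgrid T N (Suc i)) \<omega>))\<^sup>2)
        \<le> ennreal (2 * (real CARD('d) * \<delta>)^2 + c3 * Z \<omega>)"
        unfolding c3_def Z_def Abar_def Abarc_def
        by (rule ennreal_leI, rule jump_pt[OF AA bm T N G HQ M Mh d i \<omega>])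
    qed
    also have "\<dots> = ennreal (\<integral>\<omega>. 2 * (real CARD('d) * \<delta>)^2 + c3 * Z \<omega> \<partial>P)"
      using iZ c3 unfolding Z_def by (intro nn_integral_eq_integral) auto
    also have "\<dots> = ennreal (2 * (real CARD('d) * \<delta>)^2 + c3 * (\<integral>\<omega>. Z \<omega> \<partial>P))"
      using iZ prob_space.prob_space[OF bm_dB(1)[OF bm T N]] by simp
    also have "\<dots> \<le> ennreal K0"
      unfolding K0_def using IZ c3 by (intro ennreal_leI add_left_mono mult_left_mono) auto
    finally show ?thesis .
  qed
  have "jump_sum b f \<sigma> H DH P B G T N \<delta> R \<rho> x0 \<le> (\<Sum>i<N. ennreal K0)"
    unfolding jump_sum_def by (intro sum_mono each) simp
  also have "\<dots> = ennreal (real N * K0)"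
  proof -
    have "h > 0" unfolding h_def using T N by simp
    then have "K0 \<ge> 0" unfolding K0_def using c3 by (intro add_nonneg_nonneg mult_nonneg_nonneg) auto
    then show ?thesis by (simp add: ennreal_of_nat_eq_real_of_nat ennreal_mult)
  qed
  also have "\<dots> \<le> ennreal (C66c (real CARD('d)) L Lam K (Cq 1) (Cq 2) T * (T / real N) *
              ((\<delta> / (T / real N))\<^sup>2 + ((T / real N) powr (- 1 / 2) * real Mq powr (- 1 / real CARD('d)))\<^sup>2))"
  proof (rule ennreal_leI)
    show "real N * K0 \<le> C66c (real CARD('d)) L Lam K (Cq 1) (Cq 2) T * (T / real N) *
              ((\<delta> / (T / real N))\<^sup>2 + ((T / real N) powr (- 1 / 2) * real Mq powr (- 1 / real CARD('d)))\<^sup>2)"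
      unfolding K0_def m_def[symmetric] h_def[symmetric] power_mult_distrib[of "real CARD('d)" \<delta>] mult.assoc[symmetric]
      by (rule final_arith[OF h_def T N c3, of "(real CARD('d))^2"])
         (auto simp: C66c_def c3_def Abar_def power_mult_distrib)
  qed
  finally show ?thesis .
qed

theorem lemma6p6:
  fixes p T L Lam lam K \<alpha> :: real and Cq :: "real \<Rightarrow> real"
  assumes "p \<ge> 2" and "T > 0" and "lam > 0" and "0 < \<alpha>" and "\<alpha> < 1"
  shows "\<exists>c C66. c > 0 \<and> C66 > 0 \<and>
    (\<forall>(b :: real^'d \<Rightarrow> real \<Rightarrow> real^'d \<Rightarrow> real^'d) f \<sigma> H DH
      (P :: 'a measure) B G (Lam_grid :: (real^'d) set) (Mq :: nat) (N :: nat) \<delta> R \<rho> x0.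
      assumption_A L Lam lam K \<alpha> b f \<sigma> H DH \<longrightarrow>
      brownian_motion P B \<longrightarrow>
      Mq \<ge> 1 \<longrightarrow> finite Lam_grid \<longrightarrow> card Lam_grid = Mq \<longrightarrow>
      nearest_proj Lam_grid G \<longrightarrow> G \<in> borel_measurable borel \<longrightarrow>
      (\<forall>q\<ge>1. \<forall>k<N.
          integrable P (\<lambda>\<omega>. norm (gB G B T N k \<omega> - dB B T N k \<omega>) powr q) \<and>
          (\<integral>\<omega>. norm (gB G B T N k \<omega> - dB B T N k \<omega>) powr q \<partial>P) powr (1 / q)
            \<le> Cq q * sqrt (T / real N) * real Mq powr (- 1 / real CARD('d))) \<longrightarrow>
      N \<ge> 1 \<longrightarrow> \<delta> > 0 \<longrightarrow> R > 0 \<longrightarrow> \<rho> \<ge> 1 \<longrightarrow>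
      x0 \<in> C_i \<delta> R \<rho> 0 \<longrightarrow>
      T / real N < c \<longrightarrow> \<delta>\<^sup>2 < T / real N \<longrightarrow>
      real Mq powr (- 2 / real CARD('d)) < T / real N \<longrightarrow>
      jump_sum b f \<sigma> H DH P B G T N \<delta> R \<rho> x0
        \<le> ennreal (C66 * (T / real N) *
              ((\<delta> / (T / real N))\<^sup>2 + ((T / real N) powr (- 1 / 2) * real Mq powr (- 1 / real CARD('d)))\<^sup>2)))"
proof (rule exI[of _ "1::real"], rule exI[of _ "C66c (real CARD('d)) L Lam K (Cq 1) (Cq 2) T"], intro conjI allI impI)
  show "(0::real) < 1" by simp
  show "0 < C66c (real CARD('d)) L Lam K (Cq 1) (Cq 2) T" using assms(2) by (rule C66c_pos)
next
  fix b :: "real^'d \<Rightarrow> real \<Rightarrow> real^'d \<Rightarrow> real^'d" and f :: "real^'d \<Rightarrow> real \<Rightarrow> real^'d \<Rightarrow> real"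
    and \<sigma> :: "real^'d \<Rightarrow> real \<Rightarrow> real^'d^'d" and H :: "real^'d \<Rightarrow> real" and DH :: "real^'d \<Rightarrow> real^'d"
    and P :: "'a measure"
    and B G and Lam_grid :: "(real^'d) set" and Mq :: nat and N :: nat and \<delta> R \<rho> and x0 :: "real^'d"
  assume AA: "assumption_A L Lam lam K \<alpha> b f \<sigma> H DH" and bm: "brownian_motion P B"
    and M: "Mq \<ge> 1" and "finite Lam_grid" and "card Lam_grid = Mq"
    and "nearest_proj Lam_grid G" and G: "G \<in> borel_measurable borel"
    and HQ: "\<forall>q\<ge>1. \<forall>k<N.
          integrable P (\<lambda>\<omega>. norm (gB G B T N k \<omega> - dB B T N k \<omega>) powr q) \<and>
          (\<integral>\<omega>. norm (gB G B T N k \<omega> - dB B T N k \<omega>) powr q \<partial>P) powr (1 / q)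
            \<le> Cq q * sqrt (T / real N) * real Mq powr (- 1 / real CARD('d))"
    and N: "N \<ge> 1" and d: "\<delta> > 0" and "R > 0" and "\<rho> \<ge> 1" and "x0 \<in> C_i \<delta> R \<rho> 0"
    and "T / real N < 1" and "\<delta>\<^sup>2 < T / real N"
    and Mh: "real Mq powr (- 2 / real CARD('d)) < T / real N"
  show "jump_sum b f \<sigma> H DH P B G T N \<delta> R \<rho> x0
        \<le> ennreal (C66c (real CARD('d)) L Lam K (Cq 1) (Cq 2) T * (T / real N) *
              ((\<delta> / (T / real N))\<^sup>2 + ((T / real N) powr (- 1 / 2) * real Mq powr (- 1 / real CARD('d)))\<^sup>2))"
    by (rule main_bound[OF AA bm assms(2) N G HQ M Mh d])
qed


end
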